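(* Let $d\ge2$, let $\Omega\subseteq\mathbb{R}^d$ be a bounded open set, let $K\subseteq\Omega$ be compact with $\mathrm{Cap}_\Omega(K)=0$, and let $\{K_\varepsilon\}_{\varepsilon>0}$ be compact subsets of $\Omega$ concentrating to $K$. Let $E(\lambda_N)$ be the eigenspace of a Dirichlet eigenvalue $\lambda_N$ of $\Omega$ and \[ \chi_\varepsilon^2\equiv\sup\{\mathrm{Cap}_\Omega(K_\varepsilon,u):u\in E(\lambda_N),\ \|u\|_{L^2(\Omega)}=1\}. \] Then $\chi_\varepsilon\to0$ as $\varepsilon\to0$.
   Context: $H^1_0(\Omega\setminus K)$ is viewed inside $H^1_0(\Omega)$ by extension by zero. $\mathrm{Cap}_\Omega(K)=\inf\{\int_\Omega|\nabla f|^2dx:f\in H^1_0(\Omega),\ f-\eta_K\in H^1_0(\Omega\setminus K)\}$ with $\eta_K$ smooth, supported in $\Omega$, equal to $1$ near $K$. For $u\in H^1_0(\Omega)$, $V_{K,u}$ is the unique minimizer of $\int_\Omega|\nabla f|^2dx$ over $\{f\in H^1_0(\Omega):f-u\in H^1_0(\Omega\setminus K)\}$ and $\mathrm{Cap}_\Omega(K,u)=\int_\Omega|\nabla V_{K,u}|^2dx$. The family $\{K_\varepsilon\}$ concentrates to $K$ if for every open $U$ with $K\subseteq U\subseteq\Omega$ there is $\varepsilon_U>0$ with $K_\varepsilon\subseteq U$ for all $\varepsilon<\varepsilon_U$. *)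

theory Defs
  imports "HOL-Analysis.Analysis"
begin

definition cc1_fun :: "'a::euclidean_space set \<Rightarrow> ('a \<Rightarrow> real) \<Rightarrow> ('a \<Rightarrow> 'a) \<Rightarrow> bool" where
  "cc1_fun U \<phi> G \<longleftrightarrow>
     (\<forall>x. (\<phi> has_derivative (\<lambda>h. G x \<bullet> h)) (at x)) \<and> continuous_on UNIV G \<and>
     (\<exists>C. compact C \<and> C \<subseteq> U \<and> (\<forall>x. x \<notin> C \<longrightarrow> \<phi> x = 0))"

text \<open>f belongs to H^1_0(U) (closure of test functions in the H^1 norm), with weak gradient g.\<close>
definition H10_grad :: "'a::euclidean_space set \<Rightarrow> ('a \<Rightarrow> real) \<Rightarrow> ('a \<Rightarrow> 'a) \<Rightarrow> bool" where
  "H10_grad U f g \<longleftrightarrow>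
     f \<in> borel_measurable lborel \<and> g \<in> borel_measurable lborel \<and>
     (\<exists>\<phi> G. (\<forall>n. cc1_fun U (\<phi> n) (G n)) \<and>
        (\<lambda>n. \<integral>\<^sup>+ x. ennreal ((f x - \<phi> n x)\<^sup>2) \<partial>lborel) \<longlonglongrightarrow> 0 \<and>
        (\<lambda>n. \<integral>\<^sup>+ x. ennreal ((norm (g x - G n x))\<^sup>2) \<partial>lborel) \<longlonglongrightarrow> 0)"

definition H10 :: "'a::euclidean_space set \<Rightarrow> ('a \<Rightarrow> real) set" where
  "H10 U = {f. \<exists>g. H10_grad U f g}"

text \<open>Dirichlet energy \<integral>|\<nabla>f|^2 of f \<in> H^1_0(U) (the weak gradient is unique a.e.).\<close>
definition dir_energy :: "'a::euclidean_space set \<Rightarrow> ('a \<Rightarrow> real) \<Rightarrow> ennreal" where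
  "dir_energy U f = (\<integral>\<^sup>+ x. ennreal ((norm ((SOME g. H10_grad U f g) x))\<^sup>2) \<partial>lborel)"

text \<open>Cap_\<Omega>(K): infimum of the energy over f \<in> H^1_0(\<Omega>) with f - \<eta>_K \<in> H^1_0(\<Omega>\<setminus>K),
  \<eta>_K a (C^1) test function in \<Omega> equal to 1 near K (value independent of the choice of \<eta>_K).\<close>
definition cap :: "'a::euclidean_space set \<Rightarrow> 'a set \<Rightarrow> ennreal" where
  "cap \<Omega> K = Inf {dir_energy \<Omega> f | f. f \<in> H10 \<Omega> \<and>
      (\<exists>\<eta> G V. cc1_fun \<Omega> \<eta> G \<and> open V \<and> K \<subseteq> V \<and> (\<forall>x\<in>V. \<eta> x = 1) \<and>
               (\<lambda>x. f x - \<eta> x) \<in> H10 (\<Omega> - K))}"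

text \<open>Cap_\<Omega>(K,u) = \<integral>|\<nabla>V_{K,u}|^2, V_{K,u} the minimizer; i.e. the minimum (= infimum) of the energy
  over the affine set {f \<in> H^1_0(\<Omega>). f - u \<in> H^1_0(\<Omega>\<setminus>K)}.\<close>
definition cap_u :: "'a::euclidean_space set \<Rightarrow> 'a set \<Rightarrow> ('a \<Rightarrow> real) \<Rightarrow> ennreal" where
  "cap_u \<Omega> K u = Inf {dir_energy \<Omega> f | f. f \<in> H10 \<Omega> \<and> (\<lambda>x. f x - u x) \<in> H10 (\<Omega> - K)}"

definition dirichlet_eigenspace :: "'a::euclidean_space set \<Rightarrow> real \<Rightarrow> ('a \<Rightarrow> real) set" where
  "dirichlet_eigenspace \<Omega> lam = {u. \<exists>g. H10_grad \<Omega> u g \<and>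
      (\<forall>v h. H10_grad \<Omega> v h \<longrightarrow>
         (\<integral>x. g x \<bullet> h x \<partial>lborel) = lam * (\<integral>x. u x * v x \<partial>lborel))}"

definition dirichlet_eigenvalue :: "'a::euclidean_space set \<Rightarrow> real \<Rightarrow> bool" where
  "dirichlet_eigenvalue \<Omega> lam \<longleftrightarrow>
     (\<exists>u \<in> dirichlet_eigenspace \<Omega> lam. \<not> (AE x in lborel. u x = 0))"

definition concentrates_to :: "(real \<Rightarrow> 'a::euclidean_space set) \<Rightarrow> 'a set \<Rightarrow> 'a set \<Rightarrow> bool" where
  "concentrates_to Ks K \<Omega> \<longleftrightarrow>
     (\<forall>U. open U \<and> K \<subseteq> U \<and> U \<subseteq> \<Omega> \<longrightarrow>
        (\<exists>eU>0. \<forall>\<epsilon>. 0 < \<epsilon> \<and> \<epsilon> < eU \<longrightarrow> Ks \<epsilon> \<subseteq> U))"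

definition chi_sq :: "'a::euclidean_space set \<Rightarrow> real \<Rightarrow> 'a set \<Rightarrow> ennreal" where
  "chi_sq \<Omega> lam Ke = Sup {cap_u \<Omega> Ke u | u. u \<in> dirichlet_eigenspace \<Omega> lam \<and>
                              (\<integral>\<^sup>+ x. ennreal ((u x)\<^sup>2) \<partial>lborel) = 1}"

end

theory Submission
  imports Defs
begin

lemma cc1_cont: "cc1_fun U \<phi> G \<Longrightarrow> continuous_on S \<phi>"
  unfolding cc1_fun_def
  by (meson continuous_at_imp_continuous_on has_derivative_continuous)

lemma cc1_G_zero:
  assumes "cc1_fun U \<phi> G" "compact C" "\<forall>x. x \<notin> C \<longrightarrow> \<phi> x = 0" "x \<notin> C"
  shows "G x = 0"
proof -
  have d: "(\<phi> has_derivative (\<lambda>h. G x \<bullet> h)) (at x)" using assms(1) unfolding cc1_fun_def by blast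
  have "open (- C)" using assms(2) compact_imp_closed by blast
  then have "((\<lambda>_. 0) has_derivative (\<lambda>h. G x \<bullet> h)) (at x)"
    by (rule has_derivative_transform_within_open[OF d]) (use assms in auto)
  moreover have "((\<lambda>_. 0::real) has_derivative (\<lambda>h. 0)) (at x)" by simp
  ultimately have "(\<lambda>h. G x \<bullet> h) = (\<lambda>h. 0)" by (rule has_derivative_unique)
  then have "G x \<bullet> G x = 0" by metis
  then show ?thesis by simp
qed

lemma cc1_supp:
  assumes "cc1_fun U \<phi> G"
  obtains C where "compact C" "C \<subseteq> U" "\<And>x. x \<notin> C \<Longrightarrow> \<phi> x = 0" "\<And>x. x \<notin> C \<Longrightarrow> G x = 0"
  using assms cc1_G_zero unfolding cc1_fun_def by metis

lemma cc1_bounded: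
  assumes "cc1_fun U \<phi> G"
  obtains M where "M > 0" "\<And>x. \<bar>\<phi> x\<bar> \<le> M" "\<And>x. norm (G x) \<le> M"
proof -
  obtain C where C: "compact C" "C \<subseteq> U" "\<And>x. x \<notin> C \<Longrightarrow> \<phi> x = 0" "\<And>x. x \<notin> C \<Longrightarrow> G x = 0"
    using cc1_supp[OF assms] by blast
  have c1: "continuous_on C \<phi>" using cc1_cont[OF assms] .
  have c2: "continuous_on C G" using assms unfolding cc1_fun_def using continuous_on_subset by blast
  obtain M1 where M1: "\<And>x. x \<in> C \<Longrightarrow> norm (\<phi> x) \<le> M1"
    using compact_imp_bounded[OF compact_continuous_image[OF c1 C(1)]] unfolding bounded_iff by auto
  obtain M2 where M2: "\<And>x. x \<in> C \<Longrightarrow> norm (G x) \<le> M2"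
    using compact_imp_bounded[OF compact_continuous_image[OF c2 C(1)]] unfolding bounded_iff by auto
  show ?thesis
  proof (rule that[of "1 + \<bar>M1\<bar> + \<bar>M2\<bar>"])
    fix x show "\<bar>\<phi> x\<bar> \<le> 1 + \<bar>M1\<bar> + \<bar>M2\<bar>" using M1[of x] C(3)[of x] by (cases "x \<in> C") auto
    show "norm (G x) \<le> 1 + \<bar>M1\<bar> + \<bar>M2\<bar>" using M2[of x] C(4)[of x] by (cases "x \<in> C") auto
  qed auto
qed

lemma cc1_meas: "cc1_fun U \<phi> G \<Longrightarrow> \<phi> \<in> borel_measurable borel"
  by (intro borel_measurable_continuous_onI cc1_cont)

lemma cc1_Gmeas: "cc1_fun U \<phi> G \<Longrightarrow> G \<in> borel_measurable borel"
  unfolding cc1_fun_def by (intro borel_measurable_continuous_onI) auto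

lemma cc1_zero: fixes U :: "'a::euclidean_space set" shows "cc1_fun U (\<lambda>_. 0) (\<lambda>_. 0)"
proof -
  have e: "((\<bullet>) (0::'a)) = (\<lambda>h. 0)" by (simp add: fun_eq_iff)
  show ?thesis unfolding cc1_fun_def e by (auto intro!: exI[of _ "{}"])
qed

lemma cc1_mono: "cc1_fun U \<phi> G \<Longrightarrow> U \<subseteq> V \<Longrightarrow> cc1_fun V \<phi> G"
  unfolding cc1_fun_def by blast

lemma cc1_add:
  assumes "cc1_fun U \<phi> G" "cc1_fun U \<psi> H"
  shows "cc1_fun U (\<lambda>x. \<phi> x + \<psi> x) (\<lambda>x. G x + H x)"
proof -
  obtain C where C: "compact C" "C \<subseteq> U" "\<And>x. x \<notin> C \<Longrightarrow> \<phi> x = 0" using assms(1) unfolding cc1_fun_def by blast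
  obtain D where D: "compact D" "D \<subseteq> U" "\<And>x. x \<notin> D \<Longrightarrow> \<psi> x = 0" using assms(2) unfolding cc1_fun_def by blast
  show ?thesis unfolding cc1_fun_def
  proof (intro conjI allI)
    fix x show "((\<lambda>x. \<phi> x + \<psi> x) has_derivative (\<lambda>h. (G x + H x) \<bullet> h)) (at x)"
      using has_derivative_add[of \<phi> "\<lambda>h. G x \<bullet> h" _ \<psi> "\<lambda>h. H x \<bullet> h"] assms
      unfolding cc1_fun_def by (simp add: inner_add_left)
    show "continuous_on UNIV (\<lambda>x. G x + H x)" using assms unfolding cc1_fun_def by (intro continuous_intros) auto
    show "\<exists>C. compact C \<and> C \<subseteq> U \<and> (\<forall>x. x \<notin> C \<longrightarrow> \<phi> x + \<psi> x = 0)"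
      using C D by (intro exI[of _ "C \<union> D"]) auto
  qed
qed

lemma cc1_scale:
  assumes "cc1_fun U \<phi> G"
  shows "cc1_fun U (\<lambda>x. c * \<phi> x) (\<lambda>x. c *\<^sub>R G x)"
proof -
  obtain C where C: "compact C" "C \<subseteq> U" "\<And>x. x \<notin> C \<Longrightarrow> \<phi> x = 0" using assms(1) unfolding cc1_fun_def by blast
  show ?thesis unfolding cc1_fun_def
  proof (intro conjI allI)
    fix x show "((\<lambda>x. c * \<phi> x) has_derivative (\<lambda>h. (c *\<^sub>R G x) \<bullet> h)) (at x)"
      using has_derivative_mult_right[of \<phi> "\<lambda>h. G x \<bullet> h" _ c] assms
      unfolding cc1_fun_def by (simp)
    show "continuous_on UNIV (\<lambda>x. c *\<^sub>R G x)" using assms unfolding cc1_fun_def by (intro continuous_intros) auto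
    show "\<exists>C. compact C \<and> C \<subseteq> U \<and> (\<forall>x. x \<notin> C \<longrightarrow> c * \<phi> x = 0)"
      using C by (intro exI[of _ C]) auto
  qed
qed

lemma cc1_diff:
  assumes "cc1_fun U \<phi> G" "cc1_fun U \<psi> H"
  shows "cc1_fun U (\<lambda>x. \<phi> x - \<psi> x) (\<lambda>x. G x - H x)"
  using cc1_add[OF assms(1) cc1_scale[OF assms(2), of "-1"]] by simp

lemma cc1_mult:
  assumes "cc1_fun U \<phi> G" "\<And>x. (\<eta> has_derivative (\<lambda>h. H x \<bullet> h)) (at x)" "continuous_on UNIV H"
  shows "cc1_fun U (\<lambda>x. \<phi> x * \<eta> x) (\<lambda>x. \<eta> x *\<^sub>R G x + \<phi> x *\<^sub>R H x)"
proof -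
  obtain C where C: "compact C" "C \<subseteq> U" "\<And>x. x \<notin> C \<Longrightarrow> \<phi> x = 0" using assms(1) unfolding cc1_fun_def by blast
  have ce: "continuous_on UNIV \<eta>" using assms(2)
    by (meson continuous_at_imp_continuous_on has_derivative_continuous)
  show ?thesis unfolding cc1_fun_def
  proof (intro conjI allI)
    fix x show "((\<lambda>x. \<phi> x * \<eta> x) has_derivative (\<lambda>h. (\<eta> x *\<^sub>R G x + \<phi> x *\<^sub>R H x) \<bullet> h)) (at x)"
      using has_derivative_mult[of \<phi> "\<lambda>h. G x \<bullet> h" x UNIV \<eta> "\<lambda>h. H x \<bullet> h"] assms
      unfolding cc1_fun_def by (simp add: inner_add_left algebra_simps)
    show "continuous_on UNIV (\<lambda>x. \<eta> x *\<^sub>R G x + \<phi> x *\<^sub>R H x)"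
      using assms(1,3) ce cc1_cont[OF assms(1)] unfolding cc1_fun_def by (intro continuous_intros) auto
    show "\<exists>C. compact C \<and> C \<subseteq> U \<and> (\<forall>x. x \<notin> C \<longrightarrow> \<phi> x * \<eta> x = 0)"
      using C by (intro exI[of _ C]) auto
  qed
qed

lemma cc1_translate:
  assumes "cc1_fun UNIV \<phi> G"
  shows "cc1_fun UNIV (\<lambda>x. \<phi> (x + h)) (\<lambda>x. G (x + h))"
proof -
  obtain C where C: "compact C" "\<And>x. x \<notin> C \<Longrightarrow> \<phi> x = 0" using assms(1) unfolding cc1_fun_def by blast
  show ?thesis unfolding cc1_fun_def
  proof (intro conjI allI)
    fix x
    have "((\<lambda>x. x + h) has_derivative (\<lambda>y. y)) (at x)" by (auto intro!: derivative_eq_intros)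
    moreover have "(\<phi> has_derivative (\<lambda>y. G (x + h) \<bullet> y)) (at (x + h))" using assms unfolding cc1_fun_def by blast
    ultimately show "((\<lambda>x. \<phi> (x + h)) has_derivative (\<lambda>y. G (x + h) \<bullet> y)) (at x)"
      using has_derivative_compose[of "\<lambda>x. x + h" "\<lambda>y. y" x UNIV \<phi>] by simp
    have Gc: "continuous_on UNIV G" using assms unfolding cc1_fun_def by blast
    have "continuous_on UNIV (G \<circ> (\<lambda>x. x + h))"
      by (rule continuous_on_compose) (auto intro: continuous_intros continuous_on_subset[OF Gc])
    then show "continuous_on UNIV (\<lambda>x. G (x + h))" by (simp add: o_def)
    show "\<exists>C'. compact C' \<and> C' \<subseteq> UNIV \<and> (\<forall>x. x \<notin> C' \<longrightarrow> \<phi> (x + h) = 0)"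
      using C by (intro exI[of _ "(\<lambda>x. x - h) ` C"]) (auto intro: compact_translation_subtract simp: image_iff, metis add_diff_cancel)
  qed
qed

definition NL :: "('a::euclidean_space \<Rightarrow> 'b::real_normed_vector) \<Rightarrow> ennreal" where
  "NL f = (\<integral>\<^sup>+ x. ennreal ((norm (f x))\<^sup>2) \<partial>lborel)"

lemma NL_real: "NL (f :: 'a::euclidean_space \<Rightarrow> real) = (\<integral>\<^sup>+ x. ennreal ((f x)\<^sup>2) \<partial>lborel)"
  unfolding NL_def by simp

lemma sq3: "(a+b+c)\<^sup>2 \<le> 3*a\<^sup>2+3*b\<^sup>2+3*(c::real)\<^sup>2"
proof -
  have "0 \<le> (a-b)\<^sup>2+(b-c)\<^sup>2+(a-c)\<^sup>2" by simp
  then show ?thesis by (simp add: power2_eq_square algebra_simps)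
qed

lemma NL_mono:
  assumes "\<And>x. norm (f x) \<le> c * norm (g x)" "c \<ge> 0" "g \<in> borel_measurable borel"
  shows "NL f \<le> ennreal (c\<^sup>2) * NL g"
proof -
  have "NL f \<le> (\<integral>\<^sup>+ x. ennreal (c\<^sup>2) * ennreal ((norm (g x))\<^sup>2) \<partial>lborel)"
    unfolding NL_def
  proof (intro nn_integral_mono)
    fix x
    have "(norm (f x))\<^sup>2 \<le> (c * norm (g x))\<^sup>2" using assms(1)[of x] by (intro power_mono) auto
    then show "ennreal ((norm (f x))\<^sup>2) \<le> ennreal (c\<^sup>2) * ennreal ((norm (g x))\<^sup>2)"
      by (simp add: ennreal_mult'[symmetric] power_mult_distrib)
  qed
  also have "\<dots> = ennreal (c\<^sup>2) * NL g" unfolding NL_def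
    using assms(3) by (intro nn_integral_cmult) auto
  finally show ?thesis .
qed

lemma NL_mono1:
  assumes "\<And>x. norm (f x) \<le> norm (g x)"
  shows "NL f \<le> NL g"
  unfolding NL_def using assms
  by (intro nn_integral_mono ennreal_leI power_mono) auto

lemma NL_add3:
  fixes f g k :: "'a::euclidean_space \<Rightarrow> 'b::real_normed_vector"
  assumes "f \<in> borel_measurable borel" "g \<in> borel_measurable borel" "k \<in> borel_measurable borel"
    "\<And>x. norm (h x) \<le> norm (f x) + norm (g x) + norm (k x)"
  shows "NL h \<le> 3 * NL f + 3 * NL g + 3 * NL k"
proof -
  have "NL h \<le> (\<integral>\<^sup>+ x. 3 * ennreal ((norm (f x))\<^sup>2) + 3 * ennreal ((norm (g x))\<^sup>2) + 3 * ennreal ((norm (k x))\<^sup>2) \<partial>lborel)"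
    unfolding NL_def
  proof (intro nn_integral_mono)
    fix x
    have "(norm (h x))\<^sup>2 \<le> (norm (f x) + norm (g x) + norm (k x))\<^sup>2" using assms(4)[of x] by (intro power_mono) auto
    also have "\<dots> \<le> 3 * (norm (f x))\<^sup>2 + 3 * (norm (g x))\<^sup>2 + 3 * (norm (k x))\<^sup>2"
      by (rule sq3)
    finally have "ennreal ((norm (h x))\<^sup>2) \<le> ennreal (3 * (norm (f x))\<^sup>2 + 3 * (norm (g x))\<^sup>2 + 3 * (norm (k x))\<^sup>2)"
      by (rule ennreal_leI)
    also have "\<dots> = 3 * ennreal ((norm (f x))\<^sup>2) + 3 * ennreal ((norm (g x))\<^sup>2) + 3 * ennreal ((norm (k x))\<^sup>2)"
      by (simp add: ennreal_mult)
    finally show "ennreal ((norm (h x))\<^sup>2) \<le> 3 * ennreal ((norm (f x))\<^sup>2) + 3 * ennreal ((norm (g x))\<^sup>2) + 3 * ennreal ((norm (k x))\<^sup>2)" .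
  qed
  also have "\<dots> = 3 * NL f + 3 * NL g + 3 * NL k" unfolding NL_def using assms
    by (simp add: nn_integral_add nn_integral_cmult)
  finally show ?thesis .
qed

lemma NL_add2:
  fixes f g :: "'a::euclidean_space \<Rightarrow> 'b::real_normed_vector"
  assumes "f \<in> borel_measurable borel" "g \<in> borel_measurable borel"
    "\<And>x. norm (h x) \<le> norm (f x) + norm (g x)"
  shows "NL h \<le> 3 * NL f + 3 * NL g"
  using NL_add3[OF assms(1,2) borel_measurable_const[of 0], of h] assms(3)
  by (simp add: NL_def)

lemma NL_translate:
  fixes f :: "'a::euclidean_space \<Rightarrow> 'b::real_normed_vector"
  assumes "f \<in> borel_measurable borel"
  shows "NL (\<lambda>x. f (x + h)) = NL f"
proof -
  have "NL f = (\<integral>\<^sup>+ x. ennreal ((norm (f x))\<^sup>2) \<partial>distr lborel borel ((+) h))"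
    unfolding NL_def lborel_distr_plus ..
  also have "\<dots> = (\<integral>\<^sup>+ x. ennreal ((norm (f (h + x)))\<^sup>2) \<partial>lborel)"
    using assms by (subst nn_integral_distr) auto
  finally show ?thesis unfolding NL_def by (simp add: add.commute)
qed

lemma enn_lim_le:
  fixes X :: "nat \<Rightarrow> ennreal"
  assumes "X \<longlonglongrightarrow> 0" "\<And>n. a \<le> c + X n"
  shows "a \<le> c"
proof -
  have "(\<lambda>n. c + X n) \<longlonglongrightarrow> c + 0" by (intro tendsto_add tendsto_const assms)
  then show ?thesis using assms(2) by (intro LIMSEQ_le_const) auto
qed

lemma enn_tendsto_cmult0:
  fixes X :: "nat \<Rightarrow> ennreal"
  assumes "X \<longlonglongrightarrow> 0" "c < \<infinity>"
  shows "(\<lambda>n. c * X n) \<longlonglongrightarrow> 0"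
  using ennreal_tendsto_cmult[OF _ assms(1), of c] assms(2) by simp

lemma enn_tendsto_add0:
  fixes X Y :: "nat \<Rightarrow> ennreal"
  assumes "X \<longlonglongrightarrow> 0" "Y \<longlonglongrightarrow> 0"
  shows "(\<lambda>n. X n + Y n) \<longlonglongrightarrow> 0"
  using tendsto_add[OF assms] by simp

lemma enn_tendsto_le0:
  fixes X Y :: "nat \<Rightarrow> ennreal"
  assumes "Y \<longlonglongrightarrow> 0" "\<And>n. X n \<le> Y n"
  shows "X \<longlonglongrightarrow> 0"
  by (rule tendsto_sandwich[of "\<lambda>_. 0" _ _ Y]) (use assms in auto)

lemma H10_grad_iff:
  "H10_grad U f g \<longleftrightarrow> f \<in> borel_measurable borel \<and> g \<in> borel_measurable borel \<and>
     (\<exists>\<phi> G. (\<forall>n. cc1_fun U (\<phi> n) (G n)) \<and> (\<lambda>n. NL (\<lambda>x. f x - \<phi> n x)) \<longlonglongrightarrow> 0 \<and>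
        (\<lambda>n. NL (\<lambda>x. g x - G n x)) \<longlonglongrightarrow> 0)"
  unfolding H10_grad_def NL_real by (simp add: NL_def)

lemma H10_grad_meas: "H10_grad U f g \<Longrightarrow> f \<in> borel_measurable borel"
  and H10_grad_meas2: "H10_grad U f g \<Longrightarrow> g \<in> borel_measurable borel"
  unfolding H10_grad_iff by auto

lemma H10_grad_cc1: "cc1_fun U \<phi> G \<Longrightarrow> H10_grad U \<phi> G"
  unfolding H10_grad_iff using cc1_meas cc1_Gmeas
  by (intro conjI exI[of _ "\<lambda>_. \<phi>"] exI[of _ "\<lambda>_. G"]) (auto simp: NL_def)

lemma H10_grad_zero: "H10_grad U (\<lambda>_. 0) (\<lambda>_. 0)"
  by (rule H10_grad_cc1[OF cc1_zero])

lemma H10_grad_mono: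
  assumes "H10_grad U f g" "U \<subseteq> V" shows "H10_grad V f g"
proof -
  obtain \<phi> G where a: "\<forall>n. cc1_fun U (\<phi> n) (G n)" "(\<lambda>n. NL (\<lambda>x. f x - \<phi> n x)) \<longlonglongrightarrow> 0"
        "(\<lambda>n. NL (\<lambda>x. g x - G n x)) \<longlonglongrightarrow> 0" and m: "f \<in> borel_measurable borel" "g \<in> borel_measurable borel"
    using assms(1) unfolding H10_grad_iff by blast
  have "\<forall>n. cc1_fun V (\<phi> n) (G n)" using a(1) assms(2) cc1_mono by blast
  then show ?thesis unfolding H10_grad_iff using a m by blast
qed

lemma H10_grad_add:
  assumes "H10_grad U f g" "H10_grad U f' g'"
  shows "H10_grad U (\<lambda>x. f x + f' x) (\<lambda>x. g x + g' x)"
proof -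
  from assms(1) obtain \<phi> G where a: "\<forall>n. cc1_fun U (\<phi> n) (G n)" "(\<lambda>n. NL (\<lambda>x. f x - \<phi> n x)) \<longlonglongrightarrow> 0"
        "(\<lambda>n. NL (\<lambda>x. g x - G n x)) \<longlonglongrightarrow> 0" and m: "f \<in> borel_measurable borel" "g \<in> borel_measurable borel"
    unfolding H10_grad_iff by blast
  from assms(2) obtain \<psi> H where b: "\<forall>n. cc1_fun U (\<psi> n) (H n)" "(\<lambda>n. NL (\<lambda>x. f' x - \<psi> n x)) \<longlonglongrightarrow> 0"
        "(\<lambda>n. NL (\<lambda>x. g' x - H n x)) \<longlonglongrightarrow> 0" and m': "f' \<in> borel_measurable borel" "g' \<in> borel_measurable borel"
    unfolding H10_grad_iff by blast
  have m1: "(\<lambda>x. f x - \<phi> n x) \<in> borel_measurable borel" "(\<lambda>x. f' x - \<psi> n x) \<in> borel_measurable borel"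
    "(\<lambda>x. g x - G n x) \<in> borel_measurable borel" "(\<lambda>x. g' x - H n x) \<in> borel_measurable borel" for n
  proof -
    have "\<phi> n \<in> borel_measurable borel" "G n \<in> borel_measurable borel" "\<psi> n \<in> borel_measurable borel" "H n \<in> borel_measurable borel"
      using a(1) b(1) cc1_meas cc1_Gmeas by blast+
    then show "(\<lambda>x. f x - \<phi> n x) \<in> borel_measurable borel" "(\<lambda>x. f' x - \<psi> n x) \<in> borel_measurable borel"
    "(\<lambda>x. g x - G n x) \<in> borel_measurable borel" "(\<lambda>x. g' x - H n x) \<in> borel_measurable borel"
      using m m' by auto
  qed
  show ?thesis unfolding H10_grad_iff
  proof (intro conjI exI[of _ "\<lambda>n x. \<phi> n x + \<psi> n x"] exI[of _ "\<lambda>n x. G n x + H n x"])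
    show "(\<lambda>x. f x + f' x) \<in> borel_measurable borel" "(\<lambda>x. g x + g' x) \<in> borel_measurable borel" using m m' by auto
    show "\<forall>n. cc1_fun U (\<lambda>x. \<phi> n x + \<psi> n x) (\<lambda>x. G n x + H n x)" using a(1) b(1) cc1_add by blast
    show "(\<lambda>n. NL (\<lambda>x. f x + f' x - (\<phi> n x + \<psi> n x))) \<longlonglongrightarrow> 0"
    proof (rule enn_tendsto_le0)
      show "(\<lambda>n. 3 * NL (\<lambda>x. f x - \<phi> n x) + 3 * NL (\<lambda>x. f' x - \<psi> n x)) \<longlonglongrightarrow> 0"
        by (intro enn_tendsto_add0 enn_tendsto_cmult0 a b) auto
      show "NL (\<lambda>x. f x + f' x - (\<phi> n x + \<psi> n x)) \<le> 3 * NL (\<lambda>x. f x - \<phi> n x) + 3 * NL (\<lambda>x. f' x - \<psi> n x)" for n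
        by (rule NL_add2[OF m1(1,2)]) (metis (no_types, lifting) add_diff_add norm_triangle_ineq)
    qed
    show "(\<lambda>n. NL (\<lambda>x. g x + g' x - (G n x + H n x))) \<longlonglongrightarrow> 0"
    proof (rule enn_tendsto_le0)
      show "(\<lambda>n. 3 * NL (\<lambda>x. g x - G n x) + 3 * NL (\<lambda>x. g' x - H n x)) \<longlonglongrightarrow> 0"
        by (intro enn_tendsto_add0 enn_tendsto_cmult0 a b) auto
      show "NL (\<lambda>x. g x + g' x - (G n x + H n x)) \<le> 3 * NL (\<lambda>x. g x - G n x) + 3 * NL (\<lambda>x. g' x - H n x)" for n
        by (rule NL_add2[OF m1(3,4)]) (metis (no_types, lifting) add_diff_add norm_triangle_ineq)
    qed
  qed
qed

lemma H10_grad_scale: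
  assumes "H10_grad U f g"
  shows "H10_grad U (\<lambda>x. c * f x) (\<lambda>x. c *\<^sub>R g x)"
proof -
  from assms(1) obtain \<phi> G where a: "\<forall>n. cc1_fun U (\<phi> n) (G n)" "(\<lambda>n. NL (\<lambda>x. f x - \<phi> n x)) \<longlonglongrightarrow> 0"
        "(\<lambda>n. NL (\<lambda>x. g x - G n x)) \<longlonglongrightarrow> 0" and m: "f \<in> borel_measurable borel" "g \<in> borel_measurable borel"
    unfolding H10_grad_iff by blast
  have m1: "(\<lambda>x. f x - \<phi> n x) \<in> borel_measurable borel" 
    "(\<lambda>x. g x - G n x) \<in> borel_measurable borel" for n
  proof -
    have "\<phi> n \<in> borel_measurable borel" "G n \<in> borel_measurable borel"
      using a(1) cc1_meas cc1_Gmeas by blast+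
    then show "(\<lambda>x. f x - \<phi> n x) \<in> borel_measurable borel" 
    "(\<lambda>x. g x - G n x) \<in> borel_measurable borel" using m by auto
  qed
  show ?thesis unfolding H10_grad_iff
  proof (intro conjI exI[of _ "\<lambda>n x. c * \<phi> n x"] exI[of _ "\<lambda>n x. c *\<^sub>R G n x"])
    show "(\<lambda>x. c * f x) \<in> borel_measurable borel" "(\<lambda>x. c *\<^sub>R g x) \<in> borel_measurable borel" using m by auto
    show "\<forall>n. cc1_fun U (\<lambda>x. c * \<phi> n x) (\<lambda>x. c *\<^sub>R G n x)" using a(1) cc1_scale by blast
    show "(\<lambda>n. NL (\<lambda>x. c * f x - c * \<phi> n x)) \<longlonglongrightarrow> 0"
    proof (rule enn_tendsto_le0)
      show "(\<lambda>n. ennreal (\<bar>c\<bar>\<^sup>2) * NL (\<lambda>x. f x - \<phi> n x)) \<longlonglongrightarrow> 0"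
        by (intro enn_tendsto_cmult0 a) auto
      show "NL (\<lambda>x. c * f x - c * \<phi> n x) \<le> ennreal (\<bar>c\<bar>\<^sup>2) * NL (\<lambda>x. f x - \<phi> n x)" for n
        by (rule NL_mono[OF _ _ m1(1)]) (auto simp: right_diff_distrib[symmetric] abs_mult)
    qed
    show "(\<lambda>n. NL (\<lambda>x. c *\<^sub>R g x - c *\<^sub>R G n x)) \<longlonglongrightarrow> 0"
    proof (rule enn_tendsto_le0)
      show "(\<lambda>n. ennreal (\<bar>c\<bar>\<^sup>2) * NL (\<lambda>x. g x - G n x)) \<longlonglongrightarrow> 0"
        by (intro enn_tendsto_cmult0 a) auto
      show "NL (\<lambda>x. c *\<^sub>R g x - c *\<^sub>R G n x) \<le> ennreal (\<bar>c\<bar>\<^sup>2) * NL (\<lambda>x. g x - G n x)" for n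
        by (rule NL_mono[OF _ _ m1(2)]) (auto simp: scaleR_diff_right[symmetric])
    qed
  qed
qed

lemma H10_grad_diff:
  assumes "H10_grad U f g" "H10_grad U f' g'"
  shows "H10_grad U (\<lambda>x. f x - f' x) (\<lambda>x. g x - g' x)"
  using H10_grad_add[OF assms(1) H10_grad_scale[OF assms(2), of "-1"]] by simp

lemma H10_grad_outside:
  assumes "H10_grad U f g"
  shows "(\<integral>\<^sup>+ x. indicator (- U) x * ennreal ((f x)\<^sup>2) \<partial>lborel) = 0"
proof -
  from assms(1) obtain \<phi> G where a: "\<forall>n. cc1_fun U (\<phi> n) (G n)" "(\<lambda>n. NL (\<lambda>x. f x - \<phi> n x)) \<longlonglongrightarrow> 0"
    unfolding H10_grad_iff by blast
  have "(\<integral>\<^sup>+ x. indicator (- U) x * ennreal ((f x)\<^sup>2) \<partial>lborel) \<le> 0"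
  proof (rule enn_lim_le[OF a(2)])
    fix n
    obtain C where C: "compact C" "C \<subseteq> U" "\<And>x. x \<notin> C \<Longrightarrow> \<phi> n x = 0" using cc1_supp a(1) by metis
    show "(\<integral>\<^sup>+ x. indicator (- U) x * ennreal ((f x)\<^sup>2) \<partial>lborel) \<le> 0 + NL (\<lambda>x. f x - \<phi> n x)"
      unfolding NL_def
    proof (simp, intro nn_integral_mono)
      fix x show "indicator (- U) x * ennreal ((f x)\<^sup>2) \<le> ennreal ((f x - \<phi> n x)\<^sup>2)"
      proof (cases "x \<in> U")
        case False then have "\<phi> n x = 0" using C by blast
        then show ?thesis by (simp add: indicator_def)
      qed simp
    qed
  qed
  then show ?thesis by simp
qed

lemma unif_cont_supp:
  fixes G :: "'a::euclidean_space \<Rightarrow> 'b::real_normed_vector"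
  assumes "continuous_on UNIV G" "compact C" "\<And>x. x \<notin> C \<Longrightarrow> G x = 0" "e > 0"
  obtains d where "d > 0" "\<And>x y. dist x y < d \<Longrightarrow> norm (G x - G y) < e"
proof -
  obtain R where R: "\<And>x. x \<in> C \<Longrightarrow> norm x \<le> R" using compact_imp_bounded[OF assms(2)] bounded_iff by metis
  have "uniformly_continuous_on (cball 0 (\<bar>R\<bar>+1)) G"
    by (intro compact_uniformly_continuous continuous_on_subset[OF assms(1)]) auto
  then obtain d where d: "d > 0" "\<And>x y. x \<in> cball 0 (\<bar>R\<bar>+1) \<Longrightarrow> y \<in> cball 0 (\<bar>R\<bar>+1) \<Longrightarrow> dist y x < d \<Longrightarrow> dist (G y) (G x) < e"
    unfolding uniformly_continuous_on_def using assms(4) by metis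
  show ?thesis
  proof (rule that[of "min d 1"])
    fix x y :: 'a assume xy: "dist x y < min d 1"
    show "norm (G x - G y) < e"
    proof (cases "x \<in> cball 0 (\<bar>R\<bar>+1) \<and> y \<in> cball 0 (\<bar>R\<bar>+1)")
      case True then show ?thesis using d(2)[of y x] xy by (auto simp: dist_norm)
    next
      case False
      then have "norm x > \<bar>R\<bar> + 1 \<or> norm y > \<bar>R\<bar> + 1" by auto
      moreover have "norm x \<le> norm y + dist x y" "norm y \<le> norm x + dist x y"
        by (metis dist_commute dist_0_norm dist_triangle)+
      ultimately have "norm x > R \<and> norm y > R" using xy by auto
      then have "x \<notin> C" "y \<notin> C" using R by force+
      then show ?thesis using assms(3,4) by auto
    qed
  qed (use d in auto)
qed

lemma cc1_dq:
  fixes U :: "'a::euclidean_space set" and e :: 'a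
  assumes "cc1_fun U q G"
  obtains D where "compact D"
    "\<And>t x. 0 < t \<Longrightarrow> t \<le> 1 \<Longrightarrow> x \<notin> D \<Longrightarrow> q (x + t *\<^sub>R e) = 0 \<and> q x = 0 \<and> G x = 0"
    "\<And>\<epsilon>. \<epsilon> > 0 \<Longrightarrow> \<exists>\<delta>>0. \<forall>t. 0 < t \<and> t < \<delta> \<longrightarrow> (\<forall>x. \<bar>(q (x + t *\<^sub>R e) - q x) / t - G x \<bullet> e\<bar> \<le> \<epsilon>)"
proof -
  obtain C where C: "compact C" "C \<subseteq> U" "\<And>x. x \<notin> C \<Longrightarrow> q x = 0" "\<And>x. x \<notin> C \<Longrightarrow> G x = 0"
    using cc1_supp[OF assms] by blast
  obtain R where R: "\<And>x. x \<in> C \<Longrightarrow> norm x \<le> R" using compact_imp_bounded[OF C(1)] bounded_iff by metis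
  have der: "\<And>x. (q has_derivative (\<lambda>h. G x \<bullet> h)) (at x)" and Gc: "continuous_on UNIV G"
    using assms unfolding cc1_fun_def by auto
  show ?thesis
  proof (rule that[of "cball 0 (\<bar>R\<bar> + norm e)"])
    show "compact (cball (0::'a) (\<bar>R\<bar> + norm e))" by (rule compact_cball)
    fix t :: real and x :: 'a assume t: "0 < t" "t \<le> 1" and x: "x \<notin> cball 0 (\<bar>R\<bar> + norm e)"
    have "norm x > \<bar>R\<bar> + norm e" using x by auto
    moreover have "norm x \<le> norm (x + t *\<^sub>R e) + t * norm e"
      using norm_triangle_ineq4[of "x + t *\<^sub>R e" "t *\<^sub>R e"] t by auto
    moreover have "t * norm e \<le> norm e" using t by (simp add: mult_left_le_one_le)
    ultimately have "norm (x + t *\<^sub>R e) > R" "norm x > R" using norm_ge_zero[of e] abs_ge_self[of R] by linarith+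
    then show "q (x + t *\<^sub>R e) = 0 \<and> q x = 0 \<and> G x = 0" using C R by force
  next
    fix \<epsilon> :: real assume e: "\<epsilon> > 0"
    obtain d where d: "d > 0" "\<And>x y. dist x y < d \<Longrightarrow> norm (G x - G y) < \<epsilon> / (norm e + 1)"
      using unif_cont_supp[OF Gc C(1) C(4), of "\<epsilon> / (norm e + 1)"] e by (metis divide_pos_pos norm_ge_zero add_nonneg_pos zero_less_one)
    show "\<exists>\<delta>>0. \<forall>t. 0 < t \<and> t < \<delta> \<longrightarrow> (\<forall>x. \<bar>(q (x + t *\<^sub>R e) - q x) / t - G x \<bullet> e\<bar> \<le> \<epsilon>)"
    proof (intro exI[of _ "d / (norm e + 1)"] conjI allI impI)
      show "d / (norm e + 1) > 0" using d(1) by (simp add: add_nonneg_pos)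
      fix t x assume t: "0 < t \<and> t < d / (norm e + 1)"
      have D: "DERIV (\<lambda>s. q (x + s *\<^sub>R e)) s :> G (x + s *\<^sub>R e) \<bullet> e" for s
      proof -
        have "((\<lambda>s. x + s *\<^sub>R e) has_derivative (\<lambda>h. h *\<^sub>R e)) (at s)"
          by (auto intro!: derivative_eq_intros)
        from has_derivative_compose[OF this der]
        have "((\<lambda>s. q (x + s *\<^sub>R e)) has_derivative (\<lambda>h. G (x + s *\<^sub>R e) \<bullet> (h *\<^sub>R e))) (at s)" by simp
        moreover have "(\<lambda>h. G (x + s *\<^sub>R e) \<bullet> (h *\<^sub>R e)) = (*) (G (x + s *\<^sub>R e) \<bullet> e)"
          by (rule ext) (simp add: mult.commute)
        ultimately show ?thesis by (simp add: has_field_derivative_def)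
      qed
      obtain z where z: "0 < z" "z < t" "q (x + t *\<^sub>R e) - q (x + 0 *\<^sub>R e) = (t - 0) * (G (x + z *\<^sub>R e) \<bullet> e)"
        using MVT2[of 0 t "\<lambda>s. q (x + s *\<^sub>R e)", OF _ D] t by auto
      have q: "(q (x + t *\<^sub>R e) - q x) / t = G (x + z *\<^sub>R e) \<bullet> e" using z t by (simp add: field_simps)
      have "norm (z *\<^sub>R e) \<le> t * norm e" using z by (simp add: mult_right_mono)
      also have "\<dots> \<le> d / (norm e + 1) * norm e" using t by (intro mult_right_mono) auto
      also have "\<dots> < d" using d(1) add_pos_nonneg[OF zero_less_one norm_ge_zero[of e]] by (simp add: field_simps)
      finally have "dist (x + z *\<^sub>R e) x < d" by (simp add: dist_norm)
      then have n: "norm (G (x + z *\<^sub>R e) - G x) < \<epsilon> / (norm e + 1)" by (rule d(2))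
      have "\<bar>G (x + z *\<^sub>R e) \<bullet> e - G x \<bullet> e\<bar> \<le> norm (G (x + z *\<^sub>R e) - G x) * norm e"
        by (metis Cauchy_Schwarz_ineq2 inner_diff_left)
      also have "\<dots> \<le> \<epsilon> / (norm e + 1) * norm e" using n by (intro mult_right_mono) auto
      also have "\<dots> \<le> \<epsilon>" using e add_pos_nonneg[OF zero_less_one norm_ge_zero[of e]] by (simp add: field_simps)
      finally show "\<bar>(q (x + t *\<^sub>R e) - q x) / t - G x \<bullet> e\<bar> \<le> \<epsilon>" unfolding q .
    qed
  qed
qed

lemma integrable_supp_cont:
  fixes f :: "'a::euclidean_space \<Rightarrow> 'b::{banach, second_countable_topology}"
  assumes "continuous_on UNIV f" "compact C" "\<And>x. x \<notin> C \<Longrightarrow> f x = 0"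
  shows "integrable lborel f"
proof -
  have "integrable lborel (\<lambda>x. indicator C x *\<^sub>R f x)"
    by (rule borel_integrable_compact[OF assms(2) continuous_on_subset[OF assms(1)]]) auto
  moreover have "(\<lambda>x. indicator C x *\<^sub>R f x) = f" using assms(3) by (auto simp: fun_eq_iff indicator_def)
  ultimately show ?thesis by simp
qed

lemma integrable_cc1: "cc1_fun U F GF \<Longrightarrow> integrable lborel F"
  using integrable_supp_cont cc1_cont cc1_supp by metis

lemma integral_translate:
  fixes f :: "'a::euclidean_space \<Rightarrow> 'b::{banach, second_countable_topology}"
  assumes "f \<in> borel_measurable borel"
  shows "(\<integral>x. f (x + h) \<partial>lborel) = (\<integral>x. f x \<partial>lborel)"
proof -
  have "(\<integral>x. f x \<partial>lborel) = (\<integral>x. f x \<partial>distr lborel borel ((+) h))" unfolding lborel_distr_plus ..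
  also have "\<dots> = (\<integral>x. f (h + x) \<partial>lborel)" using assms by (subst integral_distr) auto
  finally show ?thesis by (simp add: add.commute)
qed

lemma int_small:
  fixes f :: "'a::euclidean_space \<Rightarrow> real"
  assumes "integrable lborel f" "compact D" "\<And>x. \<bar>f x\<bar> \<le> \<epsilon> * indicator D x"
  shows "\<bar>\<integral>x. f x \<partial>lborel\<bar> \<le> \<epsilon> * measure lborel D"
proof -
  have fin: "emeasure lborel D < \<infinity>" using assms(2)
    by (metis compact_imp_bounded bounded_subset_cbox_symmetric emeasure_lborel_cbox_finite emeasure_mono le_less_trans sets_lborel cbox_borel)
  have D: "D \<in> sets lborel" using assms(2) by (simp add: compact_imp_closed borel_closed)
  have "\<bar>\<integral>x. f x \<partial>lborel\<bar> \<le> (\<integral>x. \<epsilon> * indicator D x \<partial>lborel)"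
    by (rule integral_abs_bound_integral[OF assms(1)]) (use fin D assms(3) in auto)
  also have "\<dots> = \<epsilon> * measure lborel D" by simp
  finally show ?thesis .
qed

lemma eps_le0:
  fixes a k :: real
  assumes "\<And>\<epsilon>. \<epsilon> > 0 \<Longrightarrow> a \<le> \<epsilon> * k" "k \<ge> 0"
  shows "a \<le> 0"
proof (rule ccontr)
  assume "\<not> a \<le> 0"
  then have a: "a > 0" by simp
  have "a \<le> a / (k + 1) * k" using assms(1)[of "a / (k+1)"] a assms(2) by simp
  also have "\<dots> < a" using a assms(2) by (simp add: field_simps)
  finally show False by simp
qed

lemma ibp0:
  assumes "cc1_fun U F GF"
  shows "(\<integral>x. GF x \<bullet> e \<partial>lborel) = 0"
proof -
  obtain D where D: "compact D"
    "\<And>t x. 0 < t \<Longrightarrow> t \<le> 1 \<Longrightarrow> x \<notin> D \<Longrightarrow> F (x + t *\<^sub>R e) = 0 \<and> F x = 0 \<and> GF x = 0"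
    "\<And>\<epsilon>. \<epsilon> > 0 \<Longrightarrow> \<exists>\<delta>>0. \<forall>t. 0 < t \<and> t < \<delta> \<longrightarrow> (\<forall>x. \<bar>(F (x + t *\<^sub>R e) - F x) / t - GF x \<bullet> e\<bar> \<le> \<epsilon>)"
    using cc1_dq[OF assms] by blast
  have Fm: "F \<in> borel_measurable borel" using cc1_meas[OF assms] .
  have Fi: "integrable lborel F" using integrable_cc1[OF assms] .
  have Fti: "integrable lborel (\<lambda>x. F (x + h))" for h
    using integrable_cc1[OF cc1_translate[OF cc1_mono[OF assms subset_UNIV]]] .
  obtain C where C: "compact C" "\<And>x. x \<notin> C \<Longrightarrow> GF x = 0" using cc1_supp[OF assms] by metis
  have Gi: "integrable lborel (\<lambda>x. GF x \<bullet> e)"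
    by (rule integrable_supp_cont[OF _ C(1)]) (use assms C in \<open>auto simp: cc1_fun_def intro!: continuous_intros\<close>)
  have "\<bar>\<integral>x. GF x \<bullet> e \<partial>lborel\<bar> \<le> \<epsilon> * measure lborel D" if e: "\<epsilon> > 0" for \<epsilon>
  proof -
    obtain \<delta> where d: "\<delta> > 0" "\<forall>t. 0 < t \<and> t < \<delta> \<longrightarrow> (\<forall>x. \<bar>(F (x + t *\<^sub>R e) - F x) / t - GF x \<bullet> e\<bar> \<le> \<epsilon>)"
      using D(3)[OF e] by blast
    define t where "t = min (\<delta>/2) 1"
    have t: "0 < t" "t < \<delta>" "t \<le> 1" using d(1) by (auto simp: t_def)
    have "(\<integral>x. (F (x + t *\<^sub>R e) - F x) / t \<partial>lborel) = ((\<integral>x. F (x + t *\<^sub>R e) \<partial>lborel) - (\<integral>x. F x \<partial>lborel)) / t"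
      using Fi Fti by simp
    also have "\<dots> = 0" using integral_translate[OF Fm] by simp
    finally have z: "(\<integral>x. (F (x + t *\<^sub>R e) - F x) / t \<partial>lborel) = 0" .
    have "(\<integral>x. GF x \<bullet> e \<partial>lborel) = (\<integral>x. GF x \<bullet> e - (F (x + t *\<^sub>R e) - F x) / t \<partial>lborel)"
      using Fi Fti Gi z by simp
    also have "\<bar>\<dots>\<bar> \<le> \<epsilon> * measure lborel D"
    proof (rule int_small[OF _ D(1)])
      show "integrable lborel (\<lambda>x. GF x \<bullet> e - (F (x + t *\<^sub>R e) - F x) / t)" using Fi Fti Gi by simp
      fix x show "\<bar>GF x \<bullet> e - (F (x + t *\<^sub>R e) - F x) / t\<bar> \<le> \<epsilon> * indicator D x"
        using d(2) t D(2)[OF t(1) t(3), of x] e by (cases "x \<in> D") (auto simp: abs_minus_commute)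
    qed
    finally show ?thesis .
  qed
  then have "\<bar>\<integral>x. GF x \<bullet> e \<partial>lborel\<bar> \<le> 0"
    by (intro eps_le0[where k = "measure lborel D"]) auto
  then show ?thesis by simp
qed

definition L2 :: "('a::euclidean_space \<Rightarrow> 'b::euclidean_space) \<Rightarrow> bool" where
  "L2 f \<longleftrightarrow> f \<in> borel_measurable borel \<and> NL f < \<infinity>"

lemma L2_diff:
  assumes "L2 f" "L2 g" shows "L2 (\<lambda>x. f x - g x)"
proof -
  have "NL (\<lambda>x. f x - g x) \<le> 3 * NL f + 3 * NL g"
    using assms unfolding L2_def by (intro NL_add2) (auto intro: norm_triangle_ineq4)
  also have "\<dots> < \<infinity>" using assms unfolding L2_def by (simp add: ennreal_mult_less_top)
  finally show ?thesis using assms unfolding L2_def by auto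
qed

lemma L2_add:
  assumes "L2 f" "L2 g" shows "L2 (\<lambda>x. f x + g x)"
proof -
  have "NL (\<lambda>x. f x + g x) \<le> 3 * NL f + 3 * NL g"
    using assms unfolding L2_def by (intro NL_add2) (auto intro: norm_triangle_ineq)
  also have "\<dots> < \<infinity>" using assms unfolding L2_def by (simp add: ennreal_mult_less_top)
  finally show ?thesis using assms unfolding L2_def by auto
qed

lemma L2_comp:
  assumes "L2 w" shows "L2 (\<lambda>x. w x \<bullet> e)"
proof -
  have "NL (\<lambda>x. w x \<bullet> e) \<le> ennreal ((norm e)\<^sup>2) * NL w"
    using assms unfolding L2_def
    by (intro NL_mono) (auto simp: mult.commute intro: order_trans[OF Cauchy_Schwarz_ineq2])
  also have "\<dots> < \<infinity>" using assms unfolding L2_def by (simp add: ennreal_mult_less_top)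
  finally show ?thesis using assms unfolding L2_def by auto
qed

lemma NL_small:
  fixes f :: "'a::euclidean_space \<Rightarrow> 'b::real_normed_vector"
  assumes "compact D" "\<And>x. norm (f x) \<le> \<epsilon> * indicator D x"
  shows "NL f \<le> ennreal (\<epsilon>\<^sup>2) * emeasure lborel D"
proof -
  have "NL f \<le> (\<integral>\<^sup>+ x. ennreal (\<epsilon>\<^sup>2) * indicator D x \<partial>lborel)"
    unfolding NL_def
  proof (intro nn_integral_mono)
    fix x
    have "(norm (f x))\<^sup>2 \<le> (\<epsilon> * indicator D x)\<^sup>2" using assms(2)[of x] by (intro power_mono) auto
    then show "ennreal ((norm (f x))\<^sup>2) \<le> ennreal (\<epsilon>\<^sup>2) * indicator D x"
      by (auto simp: indicator_def)
  qed
  also have "\<dots> = ennreal (\<epsilon>\<^sup>2) * emeasure lborel D"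
    using assms(1) by (simp add: compact_imp_closed borel_closed nn_integral_cmult_indicator)
  finally show ?thesis .
qed

lemma compact_fin: assumes "compact D" shows "emeasure lborel D < \<infinity>"
proof -
  obtain a where a: "D \<subseteq> cbox (-a) a" using bounded_subset_cbox_symmetric compact_imp_bounded[OF assms] by blast
  have "emeasure lborel D \<le> emeasure lborel (cbox (-a) a)" by (rule emeasure_mono[OF a]) simp
  also have "\<dots> < \<infinity>" by (rule emeasure_lborel_cbox_finite)
  finally show ?thesis .
qed

lemma L2_supp:
  fixes f :: "'a::euclidean_space \<Rightarrow> 'b::euclidean_space"
  assumes "f \<in> borel_measurable borel" "compact D" "\<And>x. norm (f x) \<le> M * indicator D x"
  shows "L2 f"
proof -
  have "NL f \<le> ennreal (M\<^sup>2) * emeasure lborel D" by (rule NL_small[OF assms(2,3)])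
  also have "\<dots> < \<infinity>" using compact_fin[OF assms(2)] by (simp add: ennreal_mult_less_top)
  finally show ?thesis using assms(1) unfolding L2_def by simp
qed

lemma L2_cc1: assumes "cc1_fun U \<phi> G" shows "L2 \<phi>" "L2 G"
proof -
  obtain C where C: "compact C" "C \<subseteq> U" "\<And>x. x \<notin> C \<Longrightarrow> \<phi> x = 0" "\<And>x. x \<notin> C \<Longrightarrow> G x = 0"
    using cc1_supp[OF assms] by blast
  obtain M where M: "M > 0" "\<And>x. \<bar>\<phi> x\<bar> \<le> M" "\<And>x. norm (G x) \<le> M" using cc1_bounded[OF assms] by blast
  show "L2 \<phi>" using M C by (intro L2_supp[OF cc1_meas[OF assms] C(1), of M]) (auto simp: indicator_def)
  show "L2 G" using M C by (intro L2_supp[OF cc1_Gmeas[OF assms] C(1), of M]) (auto simp: indicator_def)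
qed

lemma L2_integrable_mult:
  fixes a b :: "'a::euclidean_space \<Rightarrow> real"
  assumes "L2 a" "L2 b" shows "integrable lborel (\<lambda>x. a x * b x)"
proof -
  have m: "a \<in> borel_measurable borel" "b \<in> borel_measurable borel" using assms unfolding L2_def by auto
  have "(\<integral>\<^sup>+x. ennreal (norm (a x * b x)) \<partial>lborel) \<le> (\<integral>\<^sup>+x. ennreal ((a x)\<^sup>2) + ennreal ((b x)\<^sup>2) \<partial>lborel)"
  proof (intro nn_integral_mono)
    fix x
    have "norm (a x * b x) \<le> (a x)\<^sup>2 + (b x)\<^sup>2"
    proof -
      have h1: "2 * \<bar>a x\<bar> * \<bar>b x\<bar> \<le> (a x)\<^sup>2 + (b x)\<^sup>2"
        using sum_squares_bound[of "\<bar>a x\<bar>" "\<bar>b x\<bar>"] by (simp add: power2_abs)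
      have h2: "0 \<le> \<bar>a x\<bar> * \<bar>b x\<bar>" by simp
      from h1 h2 have "\<bar>a x\<bar> * \<bar>b x\<bar> \<le> (a x)\<^sup>2 + (b x)\<^sup>2" by linarith
      then show ?thesis by (simp add: abs_mult)
    qed
    then show "ennreal (norm (a x * b x)) \<le> ennreal ((a x)\<^sup>2) + ennreal ((b x)\<^sup>2)"
      by (simp add: ennreal_plus[symmetric] del: ennreal_plus)
  qed
  also have "\<dots> = NL a + NL b" using m by (simp add: nn_integral_add NL_real)
  also have "\<dots> < \<infinity>" using assms unfolding L2_def by simp
  finally show ?thesis using m unfolding integrable_iff_bounded by auto
qed

lemma CS_L2:
  fixes a b :: "'a::euclidean_space \<Rightarrow> real"
  assumes "L2 a" "L2 b" shows "(ennreal \<bar>\<integral>x. a x * b x \<partial>lborel\<bar>)\<^sup>2 \<le> NL a * NL b"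
proof -
  have m: "a \<in> borel_measurable borel" "b \<in> borel_measurable borel" using assms unfolding L2_def by auto
  have "ennreal \<bar>\<integral>x. a x * b x \<partial>lborel\<bar> \<le> (\<integral>\<^sup>+x. norm (a x * b x) \<partial>lborel)"
    using integral_norm_bound_ennreal[OF L2_integrable_mult[OF assms]] by simp
  also have "\<dots> = (\<integral>\<^sup>+x. ennreal \<bar>a x\<bar> * ennreal \<bar>b x\<bar> \<partial>lborel)"
    by (simp add: abs_mult ennreal_mult)
  finally have "(ennreal \<bar>\<integral>x. a x * b x \<partial>lborel\<bar>)\<^sup>2 \<le> (\<integral>\<^sup>+x. ennreal \<bar>a x\<bar> * ennreal \<bar>b x\<bar> \<partial>lborel)\<^sup>2"
    by (simp add: power_mono)
  also have "\<dots> \<le> (\<integral>\<^sup>+x. (ennreal \<bar>a x\<bar>)^2 \<partial>lborel) * (\<integral>\<^sup>+x. (ennreal \<bar>b x\<bar>)^2 \<partial>lborel)"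
    by (rule Cauchy_Schwarz_nn_integral) (use m in auto)
  also have "\<dots> = NL a * NL b" by (simp add: NL_real ennreal_power power2_abs)
  finally show ?thesis .
qed

lemma IP_limit:
  fixes p q :: "'a::euclidean_space \<Rightarrow> real"
  assumes "L2 p" "L2 q" "\<And>n. L2 (P n)" "(\<lambda>n. NL (\<lambda>x. p x - P n x)) \<longlonglongrightarrow> 0"
  shows "(\<lambda>n. \<integral>x. P n x * q x \<partial>lborel) \<longlonglongrightarrow> (\<integral>x. p x * q x \<partial>lborel)"
proof -
  define r where "r n = \<bar>\<integral>x. (p x - P n x) * q x \<partial>lborel\<bar>" for n
  have L: "L2 (\<lambda>x. p x - P n x)" for n using L2_diff assms by blast
  have "(\<lambda>n. NL (\<lambda>x. p x - P n x) * NL q) \<longlonglongrightarrow> 0"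
    using enn_tendsto_cmult0[OF assms(4), of "NL q"] assms(2) unfolding L2_def by (simp add: mult.commute)
  moreover have "ennreal ((r n)\<^sup>2) \<le> NL (\<lambda>x. p x - P n x) * NL q" for n
    using CS_L2[OF L assms(2)] unfolding r_def by (simp add: ennreal_power)
  ultimately have "(\<lambda>n. ennreal ((r n)\<^sup>2)) \<longlonglongrightarrow> 0" by (rule enn_tendsto_le0)
  then have "(\<lambda>n. (r n)\<^sup>2) \<longlonglongrightarrow> 0" by (subst (asm) ennreal_tendsto_0_iff) auto
  then have "(\<lambda>n. sqrt ((r n)\<^sup>2)) \<longlonglongrightarrow> sqrt 0" by (intro tendsto_real_sqrt)
  then have "(\<lambda>n. r n) \<longlonglongrightarrow> 0" by (simp add: r_def)
  then have "(\<lambda>n. \<integral>x. (p x - P n x) * q x \<partial>lborel) \<longlonglongrightarrow> 0" unfolding r_def by (simp add: tendsto_rabs_zero_iff)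
  then have "(\<lambda>n. (\<integral>x. p x * q x \<partial>lborel) - (\<integral>x. (p x - P n x) * q x \<partial>lborel)) \<longlonglongrightarrow> (\<integral>x. p x * q x \<partial>lborel) - 0"
    by (intro tendsto_diff tendsto_const)
  moreover have "(\<integral>x. p x * q x \<partial>lborel) - (\<integral>x. (p x - P n x) * q x \<partial>lborel) = (\<integral>x. P n x * q x \<partial>lborel)" for n
    using L2_integrable_mult[OF assms(1,2)] L2_integrable_mult[OF assms(3) assms(2)]
    by (simp add: left_diff_distrib)
  ultimately show ?thesis by simp
qed

lemma L2_of_H10_grad:
  assumes "H10_grad U f g" shows "L2 f" "L2 g"
proof -
  obtain \<phi> G where a: "\<forall>n. cc1_fun U (\<phi> n) (G n)" "(\<lambda>n. NL (\<lambda>x. f x - \<phi> n x)) \<longlonglongrightarrow> 0"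
        "(\<lambda>n. NL (\<lambda>x. g x - G n x)) \<longlonglongrightarrow> 0" and m: "f \<in> borel_measurable borel" "g \<in> borel_measurable borel"
    using assms(1) unfolding H10_grad_iff by blast
  obtain n where n1: "NL (\<lambda>x. f x - \<phi> n x) < 1" and n2: "NL (\<lambda>x. g x - G n x) < 1"
  proof -
    have "eventually (\<lambda>n. NL (\<lambda>x. f x - \<phi> n x) < 1) sequentially"
      using a(2) by (rule order_tendstoD) simp
    moreover have "eventually (\<lambda>n. NL (\<lambda>x. g x - G n x) < 1) sequentially"
      using a(3) by (rule order_tendstoD) simp
    ultimately have "eventually (\<lambda>n. NL (\<lambda>x. f x - \<phi> n x) < 1 \<and> NL (\<lambda>x. g x - G n x) < 1) sequentially"
      by (rule eventually_conj)
    then obtain N where "\<forall>n\<ge>N. NL (\<lambda>x. f x - \<phi> n x) < 1 \<and> NL (\<lambda>x. g x - G n x) < 1"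
      unfolding eventually_sequentially by blast
    then show ?thesis using that[of N] by blast
  qed
  have L: "L2 (\<phi> n)" "L2 (G n)" using L2_cc1 a(1) by blast+
  have "L2 (\<lambda>x. f x - \<phi> n x)" "L2 (\<lambda>x. g x - G n x)"
    using order.strict_trans[OF n1, of \<infinity>] order.strict_trans[OF n2, of \<infinity>] m L unfolding L2_def
    by (auto intro!: borel_measurable_diff)
  from L2_add[OF this(1) L(1)] L2_add[OF this(2) L(2)] show "L2 f" "L2 g" by auto
qed

lemma grad_zero_unique:
  assumes "H10_grad U (\<lambda>_. 0) w"
  shows "AE x in lborel. w x = 0"
proof -
  obtain q H where a: "\<forall>n. cc1_fun U (q n) (H n)" "(\<lambda>n. NL (\<lambda>x. 0 - q n x)) \<longlonglongrightarrow> 0"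
        "(\<lambda>n. NL (\<lambda>x. w x - H n x)) \<longlonglongrightarrow> 0" and m: "w \<in> borel_measurable borel"
    using assms(1) unfolding H10_grad_iff by blast
  have Lw: "L2 w" using L2_of_H10_grad[OF assms] by blast
  have Lq: "L2 (q n)" "L2 (H n)" for n using L2_cc1 a(1) by blast+
  have Lz: "L2 (\<lambda>x::'a. 0::real)" unfolding L2_def NL_def by simp
  have compconv: "(\<lambda>n. NL (\<lambda>x. w x \<bullet> e - H n x \<bullet> e)) \<longlonglongrightarrow> 0" for e
  proof (rule enn_tendsto_le0)
    show "(\<lambda>n. ennreal ((norm e)\<^sup>2) * NL (\<lambda>x. w x - H n x)) \<longlonglongrightarrow> 0"
      by (intro enn_tendsto_cmult0 a) auto
    show "NL (\<lambda>x. w x \<bullet> e - H n x \<bullet> e) \<le> ennreal ((norm e)\<^sup>2) * NL (\<lambda>x. w x - H n x)" for n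
      using m cc1_Gmeas[OF a(1)[rule_format, of n]]
      by (intro NL_mono) (auto simp: mult.commute inner_diff_left[symmetric] intro: order_trans[OF Cauchy_Schwarz_ineq2])
  qed
  have step1: "(\<integral>x. (w x \<bullet> e) * \<psi> x \<partial>lborel) = 0" if psi: "cc1_fun V \<psi> G\<psi>" for V \<psi> G\<psi> e
  proof -
    have d\<psi>: "\<And>x. (\<psi> has_derivative (\<lambda>h. G\<psi> x \<bullet> h)) (at x)" "continuous_on UNIV G\<psi>"
      using psi unfolding cc1_fun_def by auto
    have Lpsi: "L2 \<psi>" "L2 (\<lambda>x. G\<psi> x \<bullet> e)" using L2_cc1[OF psi] L2_comp by blast+
    have eq: "(\<integral>x. (H n x \<bullet> e) * \<psi> x \<partial>lborel) = - (\<integral>x. q n x * (G\<psi> x \<bullet> e) \<partial>lborel)" for n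
    proof -
      have "(\<integral>x. (\<psi> x *\<^sub>R H n x + q n x *\<^sub>R G\<psi> x) \<bullet> e \<partial>lborel) = 0"
        by (rule ibp0[OF cc1_mult[OF a(1)[rule_format] d\<psi>]])
      moreover have "(\<lambda>x. (\<psi> x *\<^sub>R H n x + q n x *\<^sub>R G\<psi> x) \<bullet> e) = (\<lambda>x. (H n x \<bullet> e) * \<psi> x + q n x * (G\<psi> x \<bullet> e))"
        by (auto simp: inner_add_left)
      moreover have "integrable lborel (\<lambda>x. (H n x \<bullet> e) * \<psi> x)" "integrable lborel (\<lambda>x. q n x * (G\<psi> x \<bullet> e))"
        using L2_integrable_mult L2_comp Lq Lpsi by blast+
      ultimately show ?thesis by simp
    qed
    have l1: "(\<lambda>n. \<integral>x. (H n x \<bullet> e) * \<psi> x \<partial>lborel) \<longlonglongrightarrow> (\<integral>x. (w x \<bullet> e) * \<psi> x \<partial>lborel)"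
      by (rule IP_limit[OF L2_comp[OF Lw] Lpsi(1) L2_comp[OF Lq(2)] compconv])
    have l2: "(\<lambda>n. \<integral>x. q n x * (G\<psi> x \<bullet> e) \<partial>lborel) \<longlonglongrightarrow> (\<integral>x. 0 * (G\<psi> x \<bullet> e) \<partial>lborel)"
      by (rule IP_limit[OF Lz Lpsi(2) Lq(1) a(2)])
    have "(\<lambda>n. \<integral>x. (H n x \<bullet> e) * \<psi> x \<partial>lborel) \<longlonglongrightarrow> - 0"
      unfolding eq using tendsto_minus[OF l2] by simp
    from LIMSEQ_unique[OF l1 this] show ?thesis by simp
  qed
  have step2: "(\<integral>x. (H m x \<bullet> e) * (w x \<bullet> e) \<partial>lborel) = 0" for m e
  proof -
    have cm: "cc1_fun UNIV (q m) (H m)" using a(1) cc1_mono by blast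
    obtain D where D: "compact D"
      "\<And>t x. 0 < t \<Longrightarrow> t \<le> 1 \<Longrightarrow> x \<notin> D \<Longrightarrow> q m (x + t *\<^sub>R e) = 0 \<and> q m x = 0 \<and> H m x = 0"
      "\<And>\<epsilon>. \<epsilon> > 0 \<Longrightarrow> \<exists>\<delta>>0. \<forall>t. 0 < t \<and> t < \<delta> \<longrightarrow> (\<forall>x. \<bar>(q m (x + t *\<^sub>R e) - q m x) / t - H m x \<bullet> e\<bar> \<le> \<epsilon>)"
      using cc1_dq[OF cm] by blast
    define t :: "nat \<Rightarrow> real" where "t k = 1 / Suc k" for k
    define \<psi> where "\<psi> k x = (1 / t k) * (q m (x + t k *\<^sub>R e) - q m x)" for k x
    define G\<psi> where "G\<psi> k x = (1 / t k) *\<^sub>R (H m (x + t k *\<^sub>R e) - H m x)" for k x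
    have cpsi: "cc1_fun UNIV (\<psi> k) (G\<psi> k)" for k
      unfolding \<psi>_def G\<psi>_def by (intro cc1_scale cc1_diff cc1_translate cm)
    have Lpsi: "L2 (\<psi> k)" for k using L2_cc1[OF cpsi] by blast
    have z: "(\<integral>x. \<psi> k x * (w x \<bullet> e) \<partial>lborel) = 0" for k
      using step1[OF cpsi[of k], of e] by (simp add: mult.commute)
    have conv: "(\<lambda>k. NL (\<lambda>x. H m x \<bullet> e - \<psi> k x)) \<longlonglongrightarrow> 0"
    proof (rule order_tendstoI)
      fix y :: ennreal assume y: "y > 0"
      show "eventually (\<lambda>k. NL (\<lambda>x. H m x \<bullet> e - \<psi> k x) < y) sequentially"
      proof -
        have fin: "emeasure lborel D < \<infinity>" by (rule compact_fin[OF D(1)])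
        obtain \<epsilon> where e: "\<epsilon> > 0" "ennreal (\<epsilon>\<^sup>2) * emeasure lborel D < y"
        proof (cases "emeasure lborel D = 0")
          case True then show ?thesis using that[of 1] y by simp
        next
          case False
          define M where "M = enn2real (emeasure lborel D)"
          have M: "M > 0" "emeasure lborel D = ennreal M" using False fin unfolding M_def
            by (auto simp: enn2real_positive_iff less_top[symmetric] ennreal_enn2real_if zero_less_iff_neq_zero)
          obtain y' where y': "y' > 0" "ennreal y' < y"
            using y by (metis dense ennreal_less_iff ennreal_enn2real_if ennreal_0 ennreal_less_zero_iff less_top_ennreal top_greatest not_less ennreal_zero_less_top)
          define \<epsilon> where "\<epsilon> = sqrt (y' / (2 * M))"
          have eq: "\<epsilon>\<^sup>2 * M = y' / 2" using M y' by (simp add: \<epsilon>_def)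
          have "ennreal (\<epsilon>\<^sup>2) * emeasure lborel D = ennreal (\<epsilon>\<^sup>2 * M)" using M by (simp add: ennreal_mult)
          also have "\<dots> = ennreal (y' / 2)" by (simp only: eq)
          also have "\<dots> < ennreal y'" using y' by (intro ennreal_lessI) auto
          also have "\<dots> < y" using y' by simp
          finally show ?thesis using that[of \<epsilon>] M y' by (simp add: \<epsilon>_def)
        qed
        obtain \<delta> where d: "\<delta> > 0" "\<forall>t. 0 < t \<and> t < \<delta> \<longrightarrow> (\<forall>x. \<bar>(q m (x + t *\<^sub>R e) - q m x) / t - H m x \<bullet> e\<bar> \<le> \<epsilon>)"
          using D(3)[OF e(1)] by blast
        obtain K where K: "1 / Suc K < \<delta>" using d(1) by (metis nat_approx_posE)
        show ?thesis unfolding eventually_sequentially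
        proof (intro exI[of _ K] allI impI)
          fix k assume k: "K \<le> k"
          have tk: "0 < t k" "t k < \<delta>" "t k \<le> 1"
            using K k unfolding t_def by (auto simp: frac_le intro: le_less_trans[rotated])
          have "NL (\<lambda>x. H m x \<bullet> e - \<psi> k x) \<le> ennreal (\<epsilon>\<^sup>2) * emeasure lborel D"
          proof (rule NL_small[OF D(1)])
            fix x
            show "norm (H m x \<bullet> e - \<psi> k x) \<le> \<epsilon> * indicator D x"
            proof (cases "x \<in> D")
              case True then show ?thesis using d(2) tk
                by (auto simp: \<psi>_def abs_minus_commute divide_inverse mult.commute)
            next
              case False then show ?thesis using D(2)[OF tk(1) tk(3) False] by (simp add: \<psi>_def)
            qed
          qed
          then show "NL (\<lambda>x. H m x \<bullet> e - \<psi> k x) < y" using e(2) by simp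
        qed
      qed
    qed simp
    have "(\<lambda>k. \<integral>x. \<psi> k x * (w x \<bullet> e) \<partial>lborel) \<longlonglongrightarrow> (\<integral>x. (H m x \<bullet> e) * (w x \<bullet> e) \<partial>lborel)"
      by (rule IP_limit[OF L2_comp[OF Lq(2)] L2_comp[OF Lw] Lpsi conv])
    then show ?thesis unfolding z by (simp add: LIMSEQ_const_iff)
  qed
  have "(\<integral>x. (w x \<bullet> e) * (w x \<bullet> e) \<partial>lborel) = 0" for e
  proof -
    have "(\<lambda>m. \<integral>x. (H m x \<bullet> e) * (w x \<bullet> e) \<partial>lborel) \<longlonglongrightarrow> (\<integral>x. (w x \<bullet> e) * (w x \<bullet> e) \<partial>lborel)"
      by (rule IP_limit[OF L2_comp[OF Lw] L2_comp[OF Lw] L2_comp[OF Lq(2)] compconv])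
    then show ?thesis unfolding step2 by (simp add: LIMSEQ_const_iff)
  qed
  then have "AE x in lborel. (w x \<bullet> e) * (w x \<bullet> e) = 0" for e
    using L2_integrable_mult[OF L2_comp[OF Lw] L2_comp[OF Lw]]
    by (subst integral_nonneg_eq_0_iff_AE[symmetric]) auto
  then have "AE x in lborel. \<forall>b\<in>Basis. w x \<bullet> b = 0"
    by (intro AE_finite_allI) auto
  then show ?thesis
    by eventually_elim (simp add: euclidean_all_zero_iff)
qed

lemma grad_unique:
  assumes "H10_grad U f g1" "H10_grad U f g2"
  shows "AE x in lborel. g1 x = g2 x"
proof -
  have "H10_grad U (\<lambda>x. f x - f x) (\<lambda>x. g1 x - g2 x)" by (rule H10_grad_diff[OF assms])
  then have "AE x in lborel. g1 x - g2 x = 0" using grad_zero_unique[of U "\<lambda>x. g1 x - g2 x"] by simp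
  then show ?thesis by auto
qed

lemma dir_energy_eq:
  assumes "H10_grad U f g"
  shows "dir_energy U f = NL g"
proof -
  have "H10_grad U f (SOME g. H10_grad U f g)" by (rule someI[of "H10_grad U f" g, OF assms])
  from grad_unique[OF this assms]
  show ?thesis unfolding dir_energy_def NL_def
    by (intro nn_integral_cong_AE) auto
qed

lemma ftc_pointwise:
  assumes "cc1_fun U \<phi> G"
  shows "ennreal ((\<phi> (x + h) - \<phi> x)\<^sup>2) \<le>
     ennreal ((norm h)\<^sup>2) * (\<integral>\<^sup>+ s. indicator {0..1::real} s * ennreal ((norm (G (x + s *\<^sub>R h)))\<^sup>2) \<partial>lborel)"
proof -
  have der: "\<And>x. (\<phi> has_derivative (\<lambda>h. G x \<bullet> h)) (at x)" and Gc: "continuous_on UNIV G"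
    using assms unfolding cc1_fun_def by auto
  define a where "a s = G (x + s *\<^sub>R h) \<bullet> h" for s
  have ac: "continuous_on UNIV a" unfolding a_def
    by (intro continuous_intros continuous_on_compose2[OF Gc]) auto
  have D: "((\<lambda>s. \<phi> (x + s *\<^sub>R h)) has_vector_derivative a s) (at s within {0..1})" for s
  proof -
    have "((\<lambda>s. x + s *\<^sub>R h) has_derivative (\<lambda>t. t *\<^sub>R h)) (at s)"
      by (auto intro!: derivative_eq_intros)
    from has_derivative_compose[OF this der]
    have "((\<lambda>s. \<phi> (x + s *\<^sub>R h)) has_derivative (\<lambda>t. G (x + s *\<^sub>R h) \<bullet> (t *\<^sub>R h))) (at s)" by simp
    moreover have "(\<lambda>t. G (x + s *\<^sub>R h) \<bullet> (t *\<^sub>R h)) = (\<lambda>t. t *\<^sub>R a s)"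
      by (rule ext) (simp add: a_def)
    ultimately have "((\<lambda>s. \<phi> (x + s *\<^sub>R h)) has_vector_derivative a s) (at s)"
      by (simp add: has_vector_derivative_def)
    then show ?thesis by (rule has_vector_derivative_at_within)
  qed
  have "(LBINT s=ereal 0..ereal 1. a s) = \<phi> (x + 1 *\<^sub>R h) - \<phi> (x + 0 *\<^sub>R h)"
    by (rule interval_integral_FTC_finite) (use continuous_on_subset[OF ac] D in auto)
  moreover have "(LBINT s=ereal 0..ereal 1. a s) = (LBINT s:{0..1}. a s)"
    by (rule interval_integral_Icc) simp
  ultimately have ftc: "\<phi> (x + h) - \<phi> x = (\<integral>s. indicator {0..1::real} s * a s \<partial>lborel)"
    by (simp add: set_lebesgue_integral_def)
  have int: "integrable lborel (\<lambda>s. indicator {0..1::real} s * a s)"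
    using borel_integrable_compact[OF compact_Icc[of 0 1] continuous_on_subset[OF ac]] by simp
  have am: "a \<in> borel_measurable borel" using ac by (rule borel_measurable_continuous_onI)
  have "ennreal \<bar>\<phi> (x + h) - \<phi> x\<bar> \<le> (\<integral>\<^sup>+s. norm (indicator {0..1::real} s * a s) \<partial>lborel)"
    unfolding ftc using integral_norm_bound_ennreal[OF int] by simp
  also have "\<dots> = (\<integral>\<^sup>+s. indicator {0..1::real} s * (indicator {0..1::real} s * ennreal \<bar>a s\<bar>) \<partial>lborel)"
    by (intro nn_integral_cong) (auto simp: indicator_def abs_mult)
  finally have "(ennreal \<bar>\<phi> (x + h) - \<phi> x\<bar>)\<^sup>2 \<le> (\<integral>\<^sup>+s. indicator {0..1::real} s * (indicator {0..1::real} s * ennreal \<bar>a s\<bar>) \<partial>lborel)\<^sup>2"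
    by (simp add: power_mono)
  also have "\<dots> \<le> (\<integral>\<^sup>+s. (indicator {0..1::real} s :: ennreal)^2 \<partial>lborel) * (\<integral>\<^sup>+s. (indicator {0..1::real} s * ennreal \<bar>a s\<bar>)^2 \<partial>lborel)"
    by (rule Cauchy_Schwarz_nn_integral) (use am in auto)
  also have "(\<integral>\<^sup>+s. (indicator {0..1::real} s :: ennreal)^2 \<partial>lborel) = 1"
  proof -
    have "(\<lambda>s. (indicator {0..1::real} s :: ennreal)^2) = indicator {0..1}" by (auto simp: fun_eq_iff indicator_def)
    then show ?thesis by simp
  qed
  also have "(\<integral>\<^sup>+s. (indicator {0..1::real} s * ennreal \<bar>a s\<bar>)^2 \<partial>lborel) \<le>
       (\<integral>\<^sup>+ s. ennreal ((norm h)\<^sup>2) * (indicator {0..1::real} s * ennreal ((norm (G (x + s *\<^sub>R h)))\<^sup>2)) \<partial>lborel)"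
  proof (intro nn_integral_mono)
    fix s
    have "\<bar>a s\<bar> \<le> norm (G (x + s *\<^sub>R h)) * norm h" unfolding a_def by (rule Cauchy_Schwarz_ineq2)
    then have "(a s)\<^sup>2 \<le> (norm (G (x + s *\<^sub>R h)) * norm h)\<^sup>2"
      by (metis abs_ge_zero power2_abs power_mono)
    then show "(indicator {0..1::real} s * ennreal \<bar>a s\<bar>)^2 \<le> ennreal ((norm h)\<^sup>2) * (indicator {0..1::real} s * ennreal ((norm (G (x + s *\<^sub>R h)))\<^sup>2))"
    proof (cases "s \<in> {0..1}")
      case True
      have "(indicator {0..1::real} s * ennreal \<bar>a s\<bar>)^2 = ennreal ((a s)\<^sup>2)" using True
        by (simp add: ennreal_power power2_abs)
      also have "\<dots> \<le> ennreal ((norm h)\<^sup>2 * (norm (G (x + s *\<^sub>R h)))\<^sup>2)"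
        using \<open>(a s)\<^sup>2 \<le> _\<close> by (intro ennreal_leI) (simp add: power_mult_distrib mult.commute)
      also have "\<dots> = ennreal ((norm h)\<^sup>2) * (indicator {0..1::real} s * ennreal ((norm (G (x + s *\<^sub>R h)))\<^sup>2))"
        using True by (simp add: ennreal_mult)
      finally show ?thesis .
    qed simp
  qed
  also have "\<dots> = ennreal ((norm h)\<^sup>2) * (\<integral>\<^sup>+ s. indicator {0..1::real} s * ennreal ((norm (G (x + s *\<^sub>R h)))\<^sup>2) \<partial>lborel)"
  proof (rule nn_integral_cmult)
    have "(\<lambda>s. G (x + s *\<^sub>R h)) \<in> borel_measurable borel"
      by (intro borel_measurable_continuous_onI continuous_on_compose2[OF Gc]) (auto intro!: continuous_intros)
    then show "(\<lambda>s. indicator {0..1::real} s * ennreal ((norm (G (x + s *\<^sub>R h)))\<^sup>2)) \<in> borel_measurable lborel"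
      by simp
  qed
  finally show ?thesis by (simp add: ennreal_power power2_abs)
qed

lemma transl_est:
  fixes h :: "'a::euclidean_space"
  assumes "cc1_fun U \<phi> G"
  shows "NL (\<lambda>x. \<phi> (x + h) - \<phi> x) \<le> ennreal ((norm h)\<^sup>2) * NL G"
proof -
  have Gm: "G \<in> borel_measurable borel" using cc1_Gmeas[OF assms] .
  define F where "F x s = indicator {0..1::real} s * ennreal ((norm (G (x + s *\<^sub>R h)))\<^sup>2)" for x :: 'a and s :: real
  have Fm: "case_prod F \<in> borel_measurable (lborel \<Otimes>\<^sub>M lborel)"
    unfolding F_def using Gm by measurable
  have "NL (\<lambda>x. \<phi> (x + h) - \<phi> x) \<le> (\<integral>\<^sup>+ x. ennreal ((norm h)\<^sup>2) * (\<integral>\<^sup>+ s. F x s \<partial>lborel) \<partial>lborel)"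
    unfolding NL_real F_def by (intro nn_integral_mono ftc_pointwise[OF assms])
  also have "\<dots> = ennreal ((norm h)\<^sup>2) * (\<integral>\<^sup>+ x. (\<integral>\<^sup>+ s. F x s \<partial>lborel) \<partial>lborel)"
    by (rule nn_integral_cmult) (use lborel.borel_measurable_nn_integral[OF Fm] in simp)
  also have "(\<integral>\<^sup>+ x. (\<integral>\<^sup>+ s. F x s \<partial>lborel) \<partial>lborel) = (\<integral>\<^sup>+ s. (\<integral>\<^sup>+ x. F x s \<partial>lborel) \<partial>lborel)"
    by (rule lborel_pair.Fubini'[symmetric, OF Fm])
  also have "\<dots> = (\<integral>\<^sup>+ s. indicator {0..1::real} s * NL G \<partial>lborel)"
  proof (intro nn_integral_cong)
    fix s :: real
    have "(\<integral>\<^sup>+ x. F x s \<partial>lborel) = indicator {0..1::real} s * NL (\<lambda>x. G (x + s *\<^sub>R h))"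
      unfolding F_def NL_def using Gm by (subst nn_integral_cmult) auto
    also have "\<dots> = indicator {0..1::real} s * NL G" using NL_translate[OF Gm] by simp
    finally show "(\<integral>\<^sup>+ x. F x s \<partial>lborel) = indicator {0..1::real} s * NL G" .
  qed
  also have "\<dots> = NL G" by (simp add: mult.commute nn_integral_cmult_indicator)
  finally show ?thesis .
qed

lemma H10_approx:
  assumes "H10_grad U f g"
  obtains \<phi> G where "\<And>n. cc1_fun U (\<phi> n) (G n)" "(\<lambda>n. NL (\<lambda>x. f x - \<phi> n x)) \<longlonglongrightarrow> 0"
        "(\<lambda>n. NL (\<lambda>x. g x - G n x)) \<longlonglongrightarrow> 0" "f \<in> borel_measurable borel" "g \<in> borel_measurable borel"
  using assms unfolding H10_grad_iff by blast

lemma NL_Gbound: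
  fixes g G :: "'a::euclidean_space \<Rightarrow> 'b::euclidean_space"
  assumes "g \<in> borel_measurable borel" "G \<in> borel_measurable borel"
  shows "NL G \<le> 3 * NL (\<lambda>x. g x - G x) + 3 * NL g"
proof (rule NL_add2)
  show "(\<lambda>x. g x - G x) \<in> borel_measurable borel" using assms by (rule borel_measurable_diff)
  show "g \<in> borel_measurable borel" by (rule assms)
  fix x show "norm (G x) \<le> norm (g x - G x) + norm (g x)"
    using norm_triangle_sub[of "G x" "g x"] by (simp add: norm_minus_commute add.commute)
qed

lemma enn36: "3 * a + 3 * a = (6::ennreal) * a"
proof -
  have "3 * a + 3 * a = (3 + 3) * (a::ennreal)" by (rule distrib_right[symmetric])
  also have "(3 + 3) * a = (6::ennreal) * a" by (metis numeral_Bit0 numeral_plus_numeral semiring_norm(2) numeral_Bit1 add_One)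
  finally show ?thesis .
qed

lemma H10_transl:
  assumes "H10_grad U f g"
  shows "NL (\<lambda>x. f (x + h) - f x) \<le> 9 * ennreal ((norm h)\<^sup>2) * NL g"
proof -
  obtain \<phi> G where a: "\<And>n. cc1_fun U (\<phi> n) (G n)" "(\<lambda>n. NL (\<lambda>x. f x - \<phi> n x)) \<longlonglongrightarrow> 0"
        "(\<lambda>n. NL (\<lambda>x. g x - G n x)) \<longlonglongrightarrow> 0" and m: "f \<in> borel_measurable borel" "g \<in> borel_measurable borel"
    using H10_approx[OF assms] by blast
  have pm: "\<phi> n \<in> borel_measurable borel" "G n \<in> borel_measurable borel" for n
    using cc1_meas cc1_Gmeas a(1) by blast+
  have hm: "(\<lambda>x. f x - \<phi> n x) \<in> borel_measurable borel" for n using m pm by auto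
  have hm2: "(\<lambda>x. f (x + h) - \<phi> n (x + h)) \<in> borel_measurable borel" for n
    using measurable_compose[OF _ hm[of n], of "\<lambda>x. x + h"] by (auto simp: o_def)
  have hm3: "(\<lambda>x. \<phi> n (x + h) - \<phi> n x) \<in> borel_measurable borel" for n
    using measurable_compose[OF _ pm(1)[of n], of "\<lambda>x. x + h"] pm by (auto)
  show ?thesis
  proof (rule enn_lim_le)
    show "(\<lambda>n. 6 * NL (\<lambda>x. f x - \<phi> n x) + 9 * ennreal ((norm h)\<^sup>2) * NL (\<lambda>x. g x - G n x)) \<longlonglongrightarrow> 0"
      by (intro enn_tendsto_add0 enn_tendsto_cmult0 a) (auto simp: ennreal_mult_less_top)
    fix n
    have e1: "NL (\<lambda>x. f (x + h) - f x) \<le> 3 * NL (\<lambda>x. f (x + h) - \<phi> n (x + h)) + 3 * NL (\<lambda>x. \<phi> n (x + h) - \<phi> n x) + 3 * NL (\<lambda>x. f x - \<phi> n x)"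
      by (rule NL_add3[OF hm2 hm3 hm]) (simp add: abs_minus_commute abs_triangle_ineq[THEN order_trans] abs_diff_triangle_ineq)
    have e2: "NL (\<lambda>x. f (x + h) - \<phi> n (x + h)) = NL (\<lambda>x. f x - \<phi> n x)"
      using NL_translate[OF hm[of n]] by simp
    have e3: "NL (\<lambda>x. \<phi> n (x + h) - \<phi> n x) \<le> ennreal ((norm h)\<^sup>2) * NL (G n)"
      by (rule transl_est[OF a(1)])
    have e4: "NL (G n) \<le> 3 * NL (\<lambda>x. g x - G n x) + 3 * NL g" by (rule NL_Gbound[OF m(2) pm(2)])
    have "NL (\<lambda>x. f (x + h) - f x) \<le> 3 * NL (\<lambda>x. f x - \<phi> n x) + 3 * (ennreal ((norm h)\<^sup>2) * (3 * NL (\<lambda>x. g x - G n x) + 3 * NL g)) + 3 * NL (\<lambda>x. f x - \<phi> n x)"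
      using e1 unfolding e2 by (rule order_trans) (intro add_mono mult_left_mono e3[THEN order_trans] e4 order_refl; simp)
    also have "\<dots> = 9 * ennreal ((norm h)\<^sup>2) * NL g + (6 * NL (\<lambda>x. f x - \<phi> n x) + 9 * ennreal ((norm h)\<^sup>2) * NL (\<lambda>x. g x - G n x))"
      by (simp add: algebra_simps enn36[symmetric])
    finally show "NL (\<lambda>x. f (x + h) - f x) \<le> 9 * ennreal ((norm h)\<^sup>2) * NL g + (6 * NL (\<lambda>x. f x - \<phi> n x) + 9 * ennreal ((norm h)\<^sup>2) * NL (\<lambda>x. g x - G n x))" .
  qed
qed

lemma poincare_test:
  fixes \<Omega> :: "'a::euclidean_space set"
  assumes "\<And>x. x \<in> \<Omega> \<Longrightarrow> norm x \<le> R" "cc1_fun \<Omega> \<phi> G" "R \<ge> 0"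
  shows "NL \<phi> \<le> ennreal ((2*R+1)\<^sup>2) * NL G"
proof -
  obtain b :: 'a where b: "b \<in> Basis" using nonempty_Basis by blast
  define h where "h = (2*R+1) *\<^sub>R b"
  have nh: "norm h = 2*R+1" using b assms(3) by (simp add: h_def)
  obtain C where C: "compact C" "C \<subseteq> \<Omega>" "\<And>x. x \<notin> C \<Longrightarrow> \<phi> x = 0" "\<And>x. x \<notin> C \<Longrightarrow> G x = 0"
    using cc1_supp[OF assms(2)] by blast
  have "NL \<phi> \<le> NL (\<lambda>x. \<phi> (x + h) - \<phi> x)"
  proof (rule NL_mono1)
    fix x show "norm (\<phi> x) \<le> norm (\<phi> (x + h) - \<phi> x)"
    proof (cases "x \<in> C")
      case True
      then have "norm x \<le> R" using C assms(1) by blast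
      moreover have "norm h \<le> norm (x + h) + norm x" using norm_triangle_sub[of h "x + h"] by simp
      ultimately have "norm (x + h) > R" using nh assms(3) by linarith
      then have "\<phi> (x + h) = 0" using C assms(1) by (meson not_le subsetD)
      then show ?thesis by simp
    qed (use C in simp)
  qed
  also have "\<dots> \<le> ennreal ((norm h)\<^sup>2) * NL G" by (rule transl_est[OF assms(2)])
  finally show ?thesis unfolding nh .
qed

lemma poincare:
  fixes \<Omega> :: "'a::euclidean_space set"
  assumes "bounded \<Omega>"
  obtains c where "\<And>f g. H10_grad \<Omega> f g \<Longrightarrow> NL f \<le> ennreal c * NL g"
proof -
  obtain R where R: "\<And>x. x \<in> \<Omega> \<Longrightarrow> norm x \<le> R" using assms bounded_iff by metis
  define R' where "R' = \<bar>R\<bar>"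
  have R': "\<And>x. x \<in> \<Omega> \<Longrightarrow> norm x \<le> R'" "R' \<ge> 0" using R by (force simp: R'_def)+
  define k where "k = (2*R'+1)\<^sup>2"
  show ?thesis
  proof (rule that[of "9 * k"])
    fix f g assume fg: "H10_grad \<Omega> f g"
    obtain \<phi> G where a: "\<And>n. cc1_fun \<Omega> (\<phi> n) (G n)" "(\<lambda>n. NL (\<lambda>x. f x - \<phi> n x)) \<longlonglongrightarrow> 0"
        "(\<lambda>n. NL (\<lambda>x. g x - G n x)) \<longlonglongrightarrow> 0" and m: "f \<in> borel_measurable borel" "g \<in> borel_measurable borel"
      using H10_approx[OF fg] by blast
    have pm: "\<phi> n \<in> borel_measurable borel" "G n \<in> borel_measurable borel" for n
      using cc1_meas cc1_Gmeas a(1) by blast+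
    show "NL f \<le> ennreal (9 * k) * NL g"
    proof (rule enn_lim_le)
      show "(\<lambda>n. 3 * NL (\<lambda>x. f x - \<phi> n x) + ennreal (9 * k) * NL (\<lambda>x. g x - G n x)) \<longlonglongrightarrow> 0"
        by (intro enn_tendsto_add0 enn_tendsto_cmult0 a) (auto simp: ennreal_mult_less_top)
      fix n
      have e1: "NL f \<le> 3 * NL (\<lambda>x. f x - \<phi> n x) + 3 * NL (\<phi> n)"
        by (rule NL_add2) (use m pm in \<open>auto intro: norm_triangle_sub[THEN order_trans] simp: add.commute\<close>)
      have e2: "NL (\<phi> n) \<le> ennreal k * NL (G n)" unfolding k_def by (rule poincare_test[OF R'(1) a(1) R'(2)])
      have e3: "NL (G n) \<le> 3 * NL (\<lambda>x. g x - G n x) + 3 * NL g" by (rule NL_Gbound[OF m(2) pm(2)])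
      have "NL f \<le> 3 * NL (\<lambda>x. f x - \<phi> n x) + 3 * (ennreal k * (3 * NL (\<lambda>x. g x - G n x) + 3 * NL g))"
        using e1 by (rule order_trans) (intro add_mono mult_left_mono e2[THEN order_trans] e3 order_refl; simp)
      also have "\<dots> = 9 * ennreal k * NL g + (3 * NL (\<lambda>x. f x - \<phi> n x) + 9 * ennreal k * NL (\<lambda>x. g x - G n x))"
        by (simp add: algebra_simps)
      also have "9 * ennreal k = ennreal (9 * k)" by (simp add: ennreal_mult k_def)
      finally show "NL f \<le> ennreal (9 * k) * NL g + (3 * NL (\<lambda>x. f x - \<phi> n x) + ennreal (9 * k) * NL (\<lambda>x. g x - G n x))" .
    qed
  qed
qed

lemma sq5: "(a+b+c+d+e)\<^sup>2 \<le> 5*a\<^sup>2+5*b\<^sup>2+5*c\<^sup>2+5*d\<^sup>2+5*(e::real)\<^sup>2"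
proof -
  have "0 \<le> (a-b)\<^sup>2+(a-c)\<^sup>2+(a-d)\<^sup>2+(a-e)\<^sup>2+(b-c)\<^sup>2+(b-d)\<^sup>2+(b-e)\<^sup>2+(c-d)\<^sup>2+(c-e)\<^sup>2+(d-e)\<^sup>2" by simp
  then show ?thesis by (simp add: power2_eq_square algebra_simps)
qed

lemma NL_add5:
  fixes a1 :: "'a::euclidean_space \<Rightarrow> 'b::real_normed_vector" and a2 :: "'a \<Rightarrow> 'c::real_normed_vector"
    and a3 :: "'a \<Rightarrow> 'd::real_normed_vector" and a4 :: "'a \<Rightarrow> 'e::real_normed_vector"
    and a5 :: "'a \<Rightarrow> 'f::real_normed_vector" and h :: "'a \<Rightarrow> 'g::real_normed_vector"
  assumes "a1 \<in> borel_measurable borel" "a2 \<in> borel_measurable borel" "a3 \<in> borel_measurable borel"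
    "a4 \<in> borel_measurable borel" "a5 \<in> borel_measurable borel"
    "\<And>x. norm (h x) \<le> norm (a1 x) + norm (a2 x) + norm (a3 x) + norm (a4 x) + norm (a5 x)"
  shows "NL h \<le> 5 * NL a1 + 5 * NL a2 + 5 * NL a3 + 5 * NL a4 + 5 * NL a5"
proof -
  have "NL h \<le> (\<integral>\<^sup>+ x. 5 * ennreal ((norm (a1 x))\<^sup>2) + 5 * ennreal ((norm (a2 x))\<^sup>2) + 5 * ennreal ((norm (a3 x))\<^sup>2)
      + 5 * ennreal ((norm (a4 x))\<^sup>2) + 5 * ennreal ((norm (a5 x))\<^sup>2) \<partial>lborel)"
    unfolding NL_def
  proof (intro nn_integral_mono)
    fix x
    have "(norm (h x))\<^sup>2 \<le> (norm (a1 x) + norm (a2 x) + norm (a3 x) + norm (a4 x) + norm (a5 x))\<^sup>2"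
      using assms(6)[of x] by (intro power_mono) auto
    also have "\<dots> \<le> 5 * (norm (a1 x))\<^sup>2 + 5 * (norm (a2 x))\<^sup>2 + 5 * (norm (a3 x))\<^sup>2 + 5 * (norm (a4 x))\<^sup>2 + 5 * (norm (a5 x))\<^sup>2"
      by (rule sq5)
    finally have "ennreal ((norm (h x))\<^sup>2) \<le> ennreal (5 * (norm (a1 x))\<^sup>2 + 5 * (norm (a2 x))\<^sup>2 + 5 * (norm (a3 x))\<^sup>2 + 5 * (norm (a4 x))\<^sup>2 + 5 * (norm (a5 x))\<^sup>2)"
      by (rule ennreal_leI)
    also have "\<dots> = 5 * ennreal ((norm (a1 x))\<^sup>2) + 5 * ennreal ((norm (a2 x))\<^sup>2) + 5 * ennreal ((norm (a3 x))\<^sup>2)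
      + 5 * ennreal ((norm (a4 x))\<^sup>2) + 5 * ennreal ((norm (a5 x))\<^sup>2)"
      by (simp add: ennreal_mult)
    finally show "ennreal ((norm (h x))\<^sup>2) \<le> 5 * ennreal ((norm (a1 x))\<^sup>2) + 5 * ennreal ((norm (a2 x))\<^sup>2) + 5 * ennreal ((norm (a3 x))\<^sup>2)
      + 5 * ennreal ((norm (a4 x))\<^sup>2) + 5 * ennreal ((norm (a5 x))\<^sup>2)" .
  qed
  also have "\<dots> = 5 * NL a1 + 5 * NL a2 + 5 * NL a3 + 5 * NL a4 + 5 * NL a5" unfolding NL_def using assms
    by (simp add: nn_integral_add nn_integral_cmult)
  finally show ?thesis .
qed

lemma cc1_mult_vanish:
  assumes "cc1_fun U \<phi> G" "\<And>x. (\<psi> has_derivative (\<lambda>h. G\<psi> x \<bullet> h)) (at x)" "continuous_on UNIV G\<psi>"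
    "open V" "\<And>x. x \<in> V \<Longrightarrow> \<psi> x = 0"
  shows "cc1_fun (U - V) (\<lambda>x. \<phi> x * \<psi> x) (\<lambda>x. \<psi> x *\<^sub>R G x + \<phi> x *\<^sub>R G\<psi> x)"
proof -
  have m: "cc1_fun U (\<lambda>x. \<phi> x * \<psi> x) (\<lambda>x. \<psi> x *\<^sub>R G x + \<phi> x *\<^sub>R G\<psi> x)" by (rule cc1_mult[OF assms(1-3)])
  obtain C where C: "compact C" "C \<subseteq> U" "\<And>x. x \<notin> C \<Longrightarrow> \<phi> x = 0" "\<And>x. x \<notin> C \<Longrightarrow> G x = 0"
    using cc1_supp[OF assms(1)] by blast
  have "compact (C - V)" using C(1) assms(4) by (rule compact_diff)
  moreover have "C - V \<subseteq> U - V" using C by blast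
  moreover have "\<forall>x. x \<notin> C - V \<longrightarrow> \<phi> x * \<psi> x = 0" using C assms(5) by auto
  ultimately show ?thesis using m unfolding cc1_fun_def by blast
qed

lemma cap_zero_witness:
  assumes "cap \<Omega> K = 0" "\<epsilon> > 0"
  obtains f \<eta> G\<eta> V where "dir_energy \<Omega> f < ennreal \<epsilon>" "f \<in> H10 \<Omega>" "cc1_fun \<Omega> \<eta> G\<eta>" "open V" "K \<subseteq> V"
    "\<And>x. x \<in> V \<Longrightarrow> \<eta> x = 1" "(\<lambda>x. f x - \<eta> x) \<in> H10 (\<Omega> - K)"
proof -
  have "cap \<Omega> K < ennreal \<epsilon>" using assms by simp
  then obtain e where "e \<in> {dir_energy \<Omega> f | f. f \<in> H10 \<Omega> \<and>
      (\<exists>\<eta> G V. cc1_fun \<Omega> \<eta> G \<and> open V \<and> K \<subseteq> V \<and> (\<forall>x\<in>V. \<eta> x = 1) \<and>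
               (\<lambda>x. f x - \<eta> x) \<in> H10 (\<Omega> - K))}" "e < ennreal \<epsilon>"
    unfolding cap_def by (auto simp: Inf_less_iff)
  then show ?thesis using that by blast
qed

lemma enn5:
  fixes a b c d e :: real
  assumes "0\<le>a" "0\<le>b" "0\<le>c" "0\<le>d" "0\<le>e"
  shows "5*ennreal a + 5*ennreal b + 5*ennreal c + 5*ennreal d + 5*ennreal e = ennreal (5*a+5*b+5*c+5*d+5*e)"
  using assms by (simp add: ennreal_mult)

lemma factA:
  fixes \<Omega> K :: "'a::euclidean_space set"
  assumes "bounded \<Omega>" "cap \<Omega> K = 0" "H10_grad \<Omega> u g" "\<delta> > 0"
  shows "\<exists>w Gw. cc1_fun (\<Omega> - K) w Gw \<and> NL (\<lambda>x. g x - Gw x) \<le> ennreal \<delta>"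
proof -
  obtain \<phi>s Gs where a: "\<And>n. cc1_fun \<Omega> (\<phi>s n) (Gs n)" "(\<lambda>n. NL (\<lambda>x. g x - Gs n x)) \<longlonglongrightarrow> 0"
    and gm: "g \<in> borel_measurable borel"
    using H10_approx[OF assms(3)] by blast
  have "eventually (\<lambda>n. NL (\<lambda>x. g x - Gs n x) < ennreal (\<delta>/10)) sequentially"
    using a(2) by (rule order_tendstoD) (use assms(4) in simp)
  then obtain n where n: "NL (\<lambda>x. g x - Gs n x) < ennreal (\<delta>/10)"
    by (auto simp: eventually_sequentially)
  define \<phi> where "\<phi> = \<phi>s n"
  define G\<phi> where "G\<phi> = Gs n"
  have c\<phi>: "cc1_fun \<Omega> \<phi> G\<phi>" unfolding \<phi>_def G\<phi>_def by (rule a(1))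
  have d\<phi>: "\<And>x. (\<phi> has_derivative (\<lambda>h. G\<phi> x \<bullet> h)) (at x)" "continuous_on UNIV G\<phi>"
    using c\<phi> unfolding cc1_fun_def by auto
  have m\<phi>: "\<phi> \<in> borel_measurable borel" "G\<phi> \<in> borel_measurable borel" using cc1_meas cc1_Gmeas c\<phi> by blast+
  obtain M where M: "M > 0" "\<And>x. \<bar>\<phi> x\<bar> \<le> M" "\<And>x. norm (G\<phi> x) \<le> M" using cc1_bounded[OF c\<phi>] by blast
  obtain c where c: "\<And>f g. H10_grad \<Omega> f g \<Longrightarrow> NL f \<le> ennreal c * NL g" using poincare[OF assms(1)] by blast
  define C0 where "C0 = \<bar>c\<bar>"
  have C0: "C0 \<ge> 0" "ennreal c \<le> ennreal C0" unfolding C0_def by (auto intro: ennreal_leI)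
  define \<epsilon> where "\<epsilon> = \<delta> / (20 * M\<^sup>2 * (C0 + 3))"
  have \<epsilon>: "\<epsilon> > 0" unfolding \<epsilon>_def using M(1) C0 assms(4) by (auto intro!: divide_pos_pos)
  have \<epsilon>eq: "5 * M\<^sup>2 * (C0 + 3) * \<epsilon> = \<delta> / 4"
  proof -
    define D where "D = M\<^sup>2 * (C0 + 3)"
    have D: "D > 0" unfolding D_def using M(1) C0 by auto
    have "5 * D * (\<delta> / (20 * D)) = \<delta> / 4" using D by (simp add: field_simps)
    then show ?thesis unfolding \<epsilon>_def D_def by (simp add: mult.assoc)
  qed
  obtain f \<eta> G\<eta> V where f: "dir_energy \<Omega> f < ennreal \<epsilon>" "f \<in> H10 \<Omega>" "cc1_fun \<Omega> \<eta> G\<eta>" "open V" "K \<subseteq> V"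
    "\<And>x. x \<in> V \<Longrightarrow> \<eta> x = 1" "(\<lambda>x. f x - \<eta> x) \<in> H10 (\<Omega> - K)"
    using cap_zero_witness[OF assms(2) \<epsilon>] by blast
  obtain gf where gf: "H10_grad \<Omega> f gf" using f(2) unfolding H10_def by blast
  have NLgf: "NL gf \<le> ennreal \<epsilon>" using f(1) dir_energy_eq[OF gf] by simp
  have NLf: "NL f \<le> ennreal (C0 * \<epsilon>)"
  proof -
    have "NL f \<le> ennreal c * NL gf" by (rule c[OF gf])
    also have "\<dots> \<le> ennreal C0 * ennreal \<epsilon>" by (intro mult_mono C0 NLgf) auto
    finally show ?thesis using C0 \<epsilon> by (simp add: ennreal_mult)
  qed
  obtain hh where hh: "H10_grad (\<Omega> - K) (\<lambda>x. f x - \<eta> x) hh" using f(7) unfolding H10_def by blast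
  have hae: "AE x in lborel. hh x = gf x - G\<eta> x"
    by (rule grad_unique[OF H10_grad_mono[OF hh] H10_grad_diff[OF gf H10_grad_cc1[OF f(3)]]]) auto
  have d\<eta>: "\<And>x. (\<eta> has_derivative (\<lambda>h. G\<eta> x \<bullet> h)) (at x)" "continuous_on UNIV G\<eta>"
    using f(3) unfolding cc1_fun_def by auto
  have m\<eta>: "\<eta> \<in> borel_measurable borel" "G\<eta> \<in> borel_measurable borel" using cc1_meas cc1_Gmeas f(3) by blast+
  have mf: "f \<in> borel_measurable borel" "gf \<in> borel_measurable borel" using H10_grad_meas H10_grad_meas2 gf by blast+
  obtain \<zeta>s G\<zeta>s where z: "\<And>n. cc1_fun (\<Omega> - K) (\<zeta>s n) (G\<zeta>s n)" "(\<lambda>n. NL (\<lambda>x. (f x - \<eta> x) - \<zeta>s n x)) \<longlonglongrightarrow> 0"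
    "(\<lambda>n. NL (\<lambda>x. hh x - G\<zeta>s n x)) \<longlonglongrightarrow> 0"
    using H10_approx[OF hh] by blast
  have "eventually (\<lambda>n. NL (\<lambda>x. (f x - \<eta> x) - \<zeta>s n x) < ennreal \<epsilon>) sequentially"
    using z(2) by (rule order_tendstoD) (use \<epsilon> in simp)
  moreover have "eventually (\<lambda>n. NL (\<lambda>x. hh x - G\<zeta>s n x) < ennreal \<epsilon>) sequentially"
    using z(3) by (rule order_tendstoD) (use \<epsilon> in simp)
  ultimately obtain m where m: "NL (\<lambda>x. (f x - \<eta> x) - \<zeta>s m x) < ennreal \<epsilon>" "NL (\<lambda>x. hh x - G\<zeta>s m x) < ennreal \<epsilon>"
    by (metis (no_types, lifting) eventually_conj eventually_sequentially order_refl)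
  define \<zeta> where "\<zeta> = \<zeta>s m"
  define G\<zeta> where "G\<zeta> = G\<zeta>s m"
  have c\<zeta>: "cc1_fun (\<Omega> - K) \<zeta> G\<zeta>" unfolding \<zeta>_def G\<zeta>_def by (rule z(1))
  have m\<zeta>: "\<zeta> \<in> borel_measurable borel" "G\<zeta> \<in> borel_measurable borel" using cc1_meas cc1_Gmeas c\<zeta> by blast+
  have t1: "cc1_fun (\<Omega> - K) (\<lambda>x. \<phi> x * (1 - \<eta> x)) (\<lambda>x. (1 - \<eta> x) *\<^sub>R G\<phi> x + \<phi> x *\<^sub>R (- G\<eta> x))"
  proof (rule cc1_mono[OF cc1_mult_vanish[OF c\<phi> _ _ f(4)]])
    fix x
    show "((\<lambda>x. 1 - \<eta> x) has_derivative (\<lambda>h. (- G\<eta> x) \<bullet> h)) (at x)"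
      using has_derivative_diff[OF has_derivative_const d\<eta>(1)[of x], of 1] by simp
  qed (use d\<eta> f(5,6) in \<open>auto intro: continuous_intros\<close>)
  have t2: "cc1_fun (\<Omega> - K) (\<lambda>x. \<zeta> x * \<phi> x) (\<lambda>x. \<phi> x *\<^sub>R G\<zeta> x + \<zeta> x *\<^sub>R G\<phi> x)"
    by (rule cc1_mult[OF c\<zeta> d\<phi>])
  define w where "w x = \<phi> x * (1 - \<eta> x) - \<zeta> x * \<phi> x" for x
  define Gw where "Gw x = ((1 - \<eta> x) *\<^sub>R G\<phi> x + \<phi> x *\<^sub>R (- G\<eta> x)) - (\<phi> x *\<^sub>R G\<zeta> x + \<zeta> x *\<^sub>R G\<phi> x)" for x
  have cw: "cc1_fun (\<Omega> - K) w Gw" unfolding w_def Gw_def by (rule cc1_diff[OF t1 t2])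
  define a1 where "a1 x = g x - G\<phi> x" for x
  define a2 where "a2 x = M * f x" for x
  define a3 where "a3 x = M *\<^sub>R gf x" for x
  define a4 where "a4 x = M * ((f x - \<eta> x) - \<zeta> x)" for x
  define a5 where "a5 x = M *\<^sub>R (G\<zeta> x - (gf x - G\<eta> x))" for x
  have id: "g x - Gw x = (g x - G\<phi> x) + f x *\<^sub>R G\<phi> x + \<phi> x *\<^sub>R gf x + (\<zeta> x - (f x - \<eta> x)) *\<^sub>R G\<phi> x
      + \<phi> x *\<^sub>R (G\<zeta> x - (gf x - G\<eta> x))" for x
    unfolding Gw_def by (simp add: algebra_simps)
  have pw: "norm (g x - Gw x) \<le> norm (a1 x) + norm (a2 x) + norm (a3 x) + norm (a4 x) + norm (a5 x)" for x
  proof -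
    have "norm (g x - Gw x) \<le> norm (g x - G\<phi> x) + norm (f x *\<^sub>R G\<phi> x) + norm (\<phi> x *\<^sub>R gf x) + norm ((\<zeta> x - (f x - \<eta> x)) *\<^sub>R G\<phi> x)
      + norm (\<phi> x *\<^sub>R (G\<zeta> x - (gf x - G\<eta> x)))"
      unfolding id by (intro norm_triangle_le add_mono order_refl norm_triangle_ineq)
    also have "norm (f x *\<^sub>R G\<phi> x) \<le> norm (a2 x)"
    proof -
      have "\<bar>f x\<bar> * norm (G\<phi> x) \<le> \<bar>f x\<bar> * M" by (intro mult_left_mono M(3)) auto
      then show ?thesis unfolding a2_def using M(1) by (simp add: abs_mult mult.commute)
    qed
    also have "norm (\<phi> x *\<^sub>R gf x) \<le> norm (a3 x)"
    proof -
      have "\<bar>\<phi> x\<bar> * norm (gf x) \<le> M * norm (gf x)" by (intro mult_right_mono M(2)) auto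
      then show ?thesis unfolding a3_def using M(1) by simp
    qed
    also have "norm ((\<zeta> x - (f x - \<eta> x)) *\<^sub>R G\<phi> x) \<le> norm (a4 x)"
    proof -
      have "\<bar>\<zeta> x - (f x - \<eta> x)\<bar> * norm (G\<phi> x) \<le> \<bar>\<zeta> x - (f x - \<eta> x)\<bar> * M" by (intro mult_left_mono M(3)) auto
      then show ?thesis unfolding a4_def using M(1) by (simp add: abs_mult mult.commute abs_minus_commute)
    qed
    also have "norm (\<phi> x *\<^sub>R (G\<zeta> x - (gf x - G\<eta> x))) \<le> norm (a5 x)"
    proof -
      have "\<bar>\<phi> x\<bar> * norm (G\<zeta> x - (gf x - G\<eta> x)) \<le> M * norm (G\<zeta> x - (gf x - G\<eta> x))" by (intro mult_right_mono M(2)) auto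
      then show ?thesis unfolding a5_def using M(1) by simp
    qed
    finally show ?thesis unfolding a1_def by simp
  qed
  have ma: "a1 \<in> borel_measurable borel" "a2 \<in> borel_measurable borel" "a3 \<in> borel_measurable borel"
    "a4 \<in> borel_measurable borel" "a5 \<in> borel_measurable borel"
    unfolding a1_def[abs_def] a2_def[abs_def] a3_def[abs_def] a4_def[abs_def] a5_def[abs_def]
    using gm m\<phi> mf m\<eta> m\<zeta> by auto
  have b1: "NL a1 \<le> ennreal (\<delta>/10)" using n unfolding a1_def \<phi>_def G\<phi>_def by simp
  have b2: "NL a2 \<le> ennreal (M\<^sup>2 * (C0 * \<epsilon>))"
  proof -
    have "NL a2 \<le> ennreal (M\<^sup>2) * NL f" unfolding a2_def using M(1) mf by (intro NL_mono) (auto simp: abs_mult)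
    also have "\<dots> \<le> ennreal (M\<^sup>2) * ennreal (C0 * \<epsilon>)" by (intro mult_left_mono NLf) auto
    finally show ?thesis using C0 \<epsilon> by (simp add: ennreal_mult)
  qed
  have b3: "NL a3 \<le> ennreal (M\<^sup>2 * \<epsilon>)"
  proof -
    have "NL a3 \<le> ennreal (M\<^sup>2) * NL gf" unfolding a3_def using M(1) mf by (intro NL_mono) auto
    also have "\<dots> \<le> ennreal (M\<^sup>2) * ennreal \<epsilon>" by (intro mult_left_mono NLgf) auto
    finally show ?thesis using C0 \<epsilon> by (simp add: ennreal_mult)
  qed
  have b4: "NL a4 \<le> ennreal (M\<^sup>2 * \<epsilon>)"
  proof -
    have "NL a4 \<le> ennreal (M\<^sup>2) * NL (\<lambda>x. (f x - \<eta> x) - \<zeta>s m x)" unfolding a4_def \<zeta>_def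
      using M(1) mf m\<eta> m\<zeta> unfolding \<zeta>_def by (intro NL_mono) (auto simp: abs_mult)
    also have "\<dots> \<le> ennreal (M\<^sup>2) * ennreal \<epsilon>" using m(1) by (intro mult_left_mono) auto
    finally show ?thesis using C0 \<epsilon> by (simp add: ennreal_mult)
  qed
  have b5: "NL a5 \<le> ennreal (M\<^sup>2 * \<epsilon>)"
  proof -
    have "NL a5 \<le> ennreal (M\<^sup>2) * NL (\<lambda>x. G\<zeta> x - (gf x - G\<eta> x))" unfolding a5_def
      using M(1) mf m\<eta> m\<zeta> by (intro NL_mono) auto
    also have "NL (\<lambda>x. G\<zeta> x - (gf x - G\<eta> x)) = NL (\<lambda>x. hh x - G\<zeta>s m x)"
      unfolding NL_def G\<zeta>_def using hae by (intro nn_integral_cong_AE) (auto simp: norm_minus_commute)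
    also have "ennreal (M\<^sup>2) * \<dots> \<le> ennreal (M\<^sup>2) * ennreal \<epsilon>" using m(2) by (intro mult_left_mono) auto
    finally show ?thesis using C0 \<epsilon> by (simp add: ennreal_mult)
  qed
  have "NL (\<lambda>x. g x - Gw x) \<le> 5 * NL a1 + 5 * NL a2 + 5 * NL a3 + 5 * NL a4 + 5 * NL a5"
    by (rule NL_add5[OF ma pw])
  also have "\<dots> \<le> 5 * ennreal (\<delta>/10) + 5 * ennreal (M\<^sup>2 * (C0 * \<epsilon>)) + 5 * ennreal (M\<^sup>2 * \<epsilon>) + 5 * ennreal (M\<^sup>2 * \<epsilon>) + 5 * ennreal (M\<^sup>2 * \<epsilon>)"
    by (intro add_mono mult_left_mono b1 b2 b3 b4 b5) auto
  also have "\<dots> = ennreal (5 * (\<delta>/10) + 5 * (M\<^sup>2 * (C0 * \<epsilon>)) + 5 * (M\<^sup>2 * \<epsilon>) + 5 * (M\<^sup>2 * \<epsilon>) + 5 * (M\<^sup>2 * \<epsilon>))"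
    by (rule enn5) (use assms(4) \<epsilon> C0 in auto)
  also have "5 * (\<delta>/10) + 5 * (M\<^sup>2 * (C0 * \<epsilon>)) + 5 * (M\<^sup>2 * \<epsilon>) + 5 * (M\<^sup>2 * \<epsilon>) + 5 * (M\<^sup>2 * \<epsilon>) = \<delta>/2 + 5 * M\<^sup>2 * (C0 + 3) * \<epsilon>"
    by (simp add: algebra_simps)
  also have "\<dots> = \<delta>/2 + \<delta>/4" unfolding \<epsilon>eq ..
  also have "ennreal (\<delta>/2 + \<delta>/4) \<le> ennreal \<delta>" using assms(4) by (intro ennreal_leI) simp
  finally show ?thesis using cw by blast
qed

definition qkey :: "real \<Rightarrow> 'a::euclidean_space \<Rightarrow> ('a \<Rightarrow> int)" where
  "qkey r x = restrict (\<lambda>b. \<lfloor>(x \<bullet> b) / r\<rfloor>) Basis"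

definition cell :: "real \<Rightarrow> ('a::euclidean_space \<Rightarrow> int) \<Rightarrow> 'a set" where
  "cell r k = {y. qkey r y = k}"

lemma basis_sum_inner:
  fixes c :: "'a::euclidean_space \<Rightarrow> real"
  assumes "i \<in> Basis" shows "(\<Sum>b\<in>Basis. c b *\<^sub>R b) \<bullet> i = c i"
  using assms by (simp add: inner_sum_left inner_Basis if_distrib sum.delta cong: if_cong)

lemma qkey_ext: "qkey r x \<in> extensional Basis"
  unfolding qkey_def by simp

lemma qkey_eq_iff: "qkey r y = qkey r x \<longleftrightarrow> (\<forall>b\<in>Basis. \<lfloor>(y \<bullet> b) / r\<rfloor> = \<lfloor>(x \<bullet> b) / r\<rfloor>)"
  unfolding qkey_def by (auto simp: fun_eq_iff restrict_def)

lemma cell_iff: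
  assumes "k \<in> extensional Basis"
  shows "y \<in> cell r k \<longleftrightarrow> (\<forall>b\<in>Basis. \<lfloor>(y \<bullet> b) / r\<rfloor> = k b)"
proof
  assume "y \<in> cell r k" then show "\<forall>b\<in>Basis. \<lfloor>(y \<bullet> b) / r\<rfloor> = k b"
    unfolding cell_def qkey_def by auto
next
  assume h: "\<forall>b\<in>Basis. \<lfloor>(y \<bullet> b) / r\<rfloor> = k b"
  have "restrict (\<lambda>b. \<lfloor>(y \<bullet> b) / r\<rfloor>) Basis b = k b" for b
    using h assms by (cases "b \<in> Basis") (auto simp: extensional_def)
  then show "y \<in> cell r k" unfolding cell_def qkey_def by auto
qed

lemma cell_sets: "cell r k \<in> sets lborel"
proof (cases "k \<in> extensional Basis")
  case True
  have "cell r k = (\<Inter>b\<in>Basis. {y. \<lfloor>(y \<bullet> b) / r\<rfloor> = k b})"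
    using cell_iff[OF True] by auto
  also have "\<dots> \<in> sets lborel" by (intro sets.finite_INT) (auto)
  finally show ?thesis .
next
  case False
  then have "cell r k = {}" unfolding cell_def using qkey_ext by blast
  then show ?thesis by simp
qed

lemma floor_eq_close:
  fixes a c :: real
  assumes "\<lfloor>a\<rfloor> = \<lfloor>c\<rfloor>" shows "\<bar>a - c\<bar> < 1"
proof -
  have "of_int \<lfloor>a\<rfloor> \<le> a" "a < of_int \<lfloor>a\<rfloor> + 1" "of_int \<lfloor>c\<rfloor> \<le> c" "c < of_int \<lfloor>c\<rfloor> + 1"
    by (simp_all add: floor_correct)
  then show ?thesis using assms by linarith
qed

lemma cell_sub_box:
  assumes "r > 0" "y \<in> cell r (qkey r x)"
  shows "y - x \<in> box (- (\<Sum>b\<in>Basis. r *\<^sub>R b)) (\<Sum>b\<in>Basis. r *\<^sub>R b)"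
proof -
  have hb: "\<bar>(y - x) \<bullet> b\<bar> < r" if b: "b \<in> Basis" for b
  proof -
    have f: "\<lfloor>(y \<bullet> b) / r\<rfloor> = \<lfloor>(x \<bullet> b) / r\<rfloor>" using assms(2) b unfolding cell_def qkey_eq_iff by auto
    have "\<bar>(y \<bullet> b) / r - (x \<bullet> b) / r\<bar> < 1" by (rule floor_eq_close[OF f])
    then have "\<bar>(y \<bullet> b - x \<bullet> b) / r\<bar> < 1" by (simp add: diff_divide_distrib)
    then show ?thesis using assms(1) by (simp add: abs_div inner_diff_left divide_less_eq)
  qed
  have h: "- r < (y - x) \<bullet> b \<and> (y - x) \<bullet> b < r" if "b \<in> Basis" for b
    using hb[OF that] unfolding abs_less_iff by linarith
  have s: "(\<Sum>b\<in>Basis. r *\<^sub>R b) \<bullet> i = r" if "i \<in> Basis" for i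
    using basis_sum_inner[OF that, of "\<lambda>_. r"] by simp
  show ?thesis unfolding mem_box using h s by (simp add: inner_minus_left)
qed

lemma cell_measure:
  fixes k :: "'a::euclidean_space \<Rightarrow> int"
  assumes "r > 0" "k \<in> extensional Basis"
  shows "emeasure lborel (cell r k) = ennreal (r ^ DIM('a))"
proof -
  define l :: 'a where "l = (\<Sum>b\<in>Basis. (r * k b) *\<^sub>R b)"
  define u :: 'a where "u = (\<Sum>b\<in>Basis. (r * k b + r) *\<^sub>R b)"
  have lb: "l \<bullet> b = r * k b" "u \<bullet> b = r * k b + r" if "b \<in> Basis" for b
    using basis_sum_inner[OF that] unfolding l_def u_def by auto
  have floor_iff: "\<lfloor>(y \<bullet> b) / r\<rfloor> = k b \<longleftrightarrow> r * k b \<le> y \<bullet> b \<and> y \<bullet> b < r * k b + r" for y b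
    using assms(1) by (simp add: floor_eq_iff field_simps)
  have c: "y \<in> cell r k \<longleftrightarrow> (\<forall>b\<in>Basis. r * k b \<le> y \<bullet> b \<and> y \<bullet> b < r * k b + r)" for y
    using cell_iff[OF assms(2)] floor_iff by auto
  have s1: "box l u \<subseteq> cell r k"
  proof
    fix y assume "y \<in> box l u"
    then have "\<forall>b\<in>Basis. r * k b < y \<bullet> b \<and> y \<bullet> b < r * k b + r" by (auto simp: mem_box lb)
    then show "y \<in> cell r k" unfolding c by (auto intro: less_imp_le)
  qed
  have s2: "cell r k \<subseteq> cbox l u" using c by (auto simp: mem_box lb less_imp_le)
  have m1: "emeasure lborel (box l u) = ennreal (r ^ DIM('a))"
    using assms(1) by (simp add: emeasure_lborel_box_eq lb inner_diff_left prod_constant)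
  have m2: "emeasure lborel (cbox l u) = ennreal (r ^ DIM('a))"
    using assms(1) by (simp add: emeasure_lborel_cbox_eq lb inner_diff_left prod_constant)
  have "emeasure lborel (box l u) \<le> emeasure lborel (cell r k)" by (rule emeasure_mono[OF s1 cell_sets])
  moreover have "emeasure lborel (cell r k) \<le> emeasure lborel (cbox l u)" by (rule emeasure_mono[OF s2]) simp
  ultimately show ?thesis using m1 m2 by (simp add: antisym)
qed

definition cavg :: "real \<Rightarrow> ('a::euclidean_space \<Rightarrow> real) \<Rightarrow> ('a \<Rightarrow> int) \<Rightarrow> real" where
  "cavg r u k = (\<integral>y. indicator (cell r k) y * u y \<partial>lborel) / r ^ DIM('a)"

definition rbox :: "real \<Rightarrow> 'a::euclidean_space set" where
  "rbox r = box (- (\<Sum>b\<in>Basis. r *\<^sub>R b)) (\<Sum>b\<in>Basis. r *\<^sub>R b)"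

lemma NL_indicator: "A \<in> sets lborel \<Longrightarrow> NL (indicator A :: 'a::euclidean_space \<Rightarrow> real) = emeasure lborel A"
proof -
  assume A: "A \<in> sets lborel"
  have "NL (indicator A :: 'a \<Rightarrow> real) = (\<integral>\<^sup>+ y. indicator A y \<partial>lborel)"
    unfolding NL_def by (intro nn_integral_cong) (auto simp: indicator_def)
  then show ?thesis using A by simp
qed

lemma nn_translate:
  fixes f :: "'a::euclidean_space \<Rightarrow> ennreal"
  assumes "f \<in> borel_measurable borel"
  shows "(\<integral>\<^sup>+ y. f y \<partial>lborel) = (\<integral>\<^sup>+ h. f (x + h) \<partial>lborel)"
proof -
  have "(\<integral>\<^sup>+ y. f y \<partial>lborel) = (\<integral>\<^sup>+ y. f y \<partial>distr lborel borel ((+) x))" unfolding lborel_distr_plus ..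
  also have "\<dots> = (\<integral>\<^sup>+ h. f (x + h) \<partial>lborel)" using assms by (subst nn_integral_distr) auto
  finally show ?thesis .
qed

lemma jensen_cell:
  fixes u :: "'a::euclidean_space \<Rightarrow> real"
  assumes "r > 0" "L2 u"
  shows "ennreal ((cavg r u (qkey r x) - u x)\<^sup>2) \<le>
    ennreal (1 / r ^ DIM('a)) * (\<integral>\<^sup>+ y. indicator (cell r (qkey r x)) y * ennreal ((u y - u x)\<^sup>2) \<partial>lborel)"
proof -
  define k where "k = qkey r x"
  define I where "I = (indicator (cell r k) :: 'a \<Rightarrow> real)"
  define m where "m = r ^ DIM('a)"
  have m: "m > 0" unfolding m_def using assms(1) by simp
  have cs: "cell r k \<in> sets lborel" by (rule cell_sets)
  have em: "emeasure lborel (cell r k) = ennreal m" unfolding m_def k_def by (rule cell_measure[OF assms(1) qkey_ext])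
  have Im: "I \<in> borel_measurable borel" unfolding I_def using cs by simp
  have NLI: "NL I = ennreal m" unfolding I_def by (simp add: NL_indicator[OF cs] em)
  have LI: "L2 I" unfolding L2_def using Im NLI by simp
  have um: "u \<in> borel_measurable borel" using assms(2) unfolding L2_def by simp
  have L1: "L2 (\<lambda>y. I y * u y)"
  proof -
    have "NL (\<lambda>y. I y * u y) \<le> NL u" by (rule NL_mono1) (auto simp: I_def indicator_def)
    then show ?thesis using assms(2) Im um unfolding L2_def by auto
  qed
  have L2c: "L2 (\<lambda>y. I y * u x)"
  proof -
    have "NL (\<lambda>y. I y * u x) \<le> ennreal ((\<bar>u x\<bar>)\<^sup>2) * NL I" by (rule NL_mono[OF _ _ Im]) (auto simp: abs_mult mult.commute)
    also have "\<dots> < \<infinity>" using NLI by (simp add: ennreal_mult_less_top)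
    finally show ?thesis using Im unfolding L2_def by auto
  qed
  define b where "b y = I y * u y - I y * u x" for y
  have Lb: "L2 b" unfolding b_def by (rule L2_diff[OF L1 L2c])
  have intI: "(\<integral>y. I y \<partial>lborel) = m"
    unfolding I_def using em cs m by (simp add: measure_def)
  have iI: "integrable lborel I" unfolding I_def using em cs by simp
  have "(\<integral>y. I y * b y \<partial>lborel) = (\<integral>y. I y * u y - u x * I y \<partial>lborel)"
    by (intro Bochner_Integration.integral_cong) (auto simp: b_def I_def indicator_def)
  also have "\<dots> = (\<integral>y. I y * u y \<partial>lborel) - u x * m"
    using L2_integrable_mult[OF LI assms(2)] iI intI by simp
  finally have e: "(\<integral>y. I y * b y \<partial>lborel) = (\<integral>y. I y * u y \<partial>lborel) - u x * m" .
  have cv: "cavg r u k = (\<integral>y. I y * u y \<partial>lborel) / m" unfolding cavg_def I_def m_def ..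
  have ib: "cavg r u k - u x = (\<integral>y. I y * b y \<partial>lborel) / m"
    unfolding cv e using m by (simp add: diff_divide_distrib)
  have NLb: "NL b = (\<integral>\<^sup>+ y. indicator (cell r k) y * ennreal ((u y - u x)\<^sup>2) \<partial>lborel)"
    unfolding NL_def b_def I_def by (intro nn_integral_cong) (auto simp: indicator_def)
  define A where "A = \<bar>\<integral>y. I y * b y \<partial>lborel\<bar>"
  have cs2: "ennreal (A\<^sup>2) \<le> ennreal m * NL b"
    using CS_L2[OF LI Lb] unfolding A_def NLI by (simp add: ennreal_power)
  have "ennreal ((cavg r u k - u x)\<^sup>2) = ennreal (A\<^sup>2) * ennreal (1 / m\<^sup>2)"
    unfolding ib A_def using m by (simp add: ennreal_mult[symmetric] power_divide power2_abs)
  also have "\<dots> \<le> ennreal m * NL b * ennreal (1 / m\<^sup>2)" by (intro mult_right_mono cs2) auto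
  also have "\<dots> = (ennreal m * ennreal (1 / m\<^sup>2)) * NL b" by (simp only: ac_simps)
  also have "ennreal m * ennreal (1 / m\<^sup>2) = ennreal (m * (1 / m\<^sup>2))" by (rule ennreal_mult[symmetric]) (use m in auto)
  also have "m * (1 / m\<^sup>2) = 1 / m" using m by (simp add: power2_eq_square)
  finally show ?thesis unfolding NLb k_def m_def .
qed

lemma cell_to_box:
  fixes u :: "'a::euclidean_space \<Rightarrow> real"
  assumes "r > 0" "u \<in> borel_measurable borel"
  shows "(\<integral>\<^sup>+ y. indicator (cell r (qkey r x)) y * ennreal ((u y - u x)\<^sup>2) \<partial>lborel) \<le>
    (\<integral>\<^sup>+ h. indicator (rbox r) h * ennreal ((u (x + h) - u x)\<^sup>2) \<partial>lborel)"
proof -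
  have "(\<integral>\<^sup>+ y. indicator (cell r (qkey r x)) y * ennreal ((u y - u x)\<^sup>2) \<partial>lborel) \<le>
    (\<integral>\<^sup>+ y. indicator (rbox r) (y - x) * ennreal ((u y - u x)\<^sup>2) \<partial>lborel)"
  proof (intro nn_integral_mono)
    fix y show "indicator (cell r (qkey r x)) y * ennreal ((u y - u x)\<^sup>2) \<le> indicator (rbox r) (y - x) * ennreal ((u y - u x)\<^sup>2)"
      using cell_sub_box[OF assms(1), of y x] unfolding rbox_def by (auto simp: indicator_def)
  qed
  also have "\<dots> = (\<integral>\<^sup>+ h. indicator (rbox r) (x + h - x) * ennreal ((u (x + h) - u x)\<^sup>2) \<partial>lborel)"
    by (rule nn_translate) (use assms(2) in \<open>auto simp: rbox_def\<close>)
  finally show ?thesis by simp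
qed

definition Pr :: "real \<Rightarrow> (('a::euclidean_space \<Rightarrow> int) set) \<Rightarrow> ('a \<Rightarrow> real) \<Rightarrow> 'a \<Rightarrow> real" where
  "Pr r Ks u x = (if qkey r x \<in> Ks then cavg r u (qkey r x) else 0)"

lemma rbox_measure:
  assumes "r > 0"
  shows "emeasure lborel (rbox r :: 'a::euclidean_space set) = ennreal ((2*r) ^ DIM('a))"
proof -
  have s: "(\<Sum>b\<in>Basis. r *\<^sub>R b) \<bullet> i = r" if "i \<in> (Basis::'a set)" for i
    using basis_sum_inner[OF that, of "\<lambda>_. r"] by simp
  define U :: 'a where "U = (\<Sum>b\<in>Basis. r *\<^sub>R b)"
  have d: "(U - (- U)) \<bullet> i = 2 * r" if "i \<in> Basis" for i
    using s[OF that] unfolding U_def by (simp add: inner_diff_left inner_minus_left inner_add_left)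
  have le: "(- U) \<bullet> i \<le> U \<bullet> i" if "i \<in> Basis" for i
    using s[OF that] assms unfolding U_def by (simp add: inner_minus_left)
  have "emeasure lborel (rbox r :: 'a set) = ennreal (\<Prod>b\<in>(Basis::'a set). (U - (- U)) \<bullet> b)"
    unfolding rbox_def U_def[symmetric] by (rule emeasure_lborel_box[OF le])
  also have "(\<Prod>b\<in>(Basis::'a set). (U - (- U)) \<bullet> b) = (\<Prod>b\<in>(Basis::'a set). 2 * r)"
    by (rule prod.cong[OF refl d])
  also have "\<dots> = (2*r) ^ DIM('a)" by (simp add: prod_constant)
  finally show ?thesis .
qed

lemma rbox_norm:
  fixes h :: "'a::euclidean_space" and r :: real
  assumes "h \<in> rbox r"
  shows "norm h \<le> real DIM('a) * r" and "r > 0 \<Longrightarrow> (norm h)\<^sup>2 \<le> (real DIM('a) * r)\<^sup>2"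
proof -
  have s: "(\<Sum>b\<in>Basis. r *\<^sub>R b) \<bullet> i = r" if "i \<in> (Basis::'a set)" for i
    using basis_sum_inner[OF that, of "\<lambda>_. r"] by simp
  have "\<bar>h \<bullet> b\<bar> \<le> r" if "b \<in> Basis" for b
    using assms that s unfolding rbox_def mem_box by (force simp: inner_minus_left abs_le_iff)
  then have "(\<Sum>b\<in>Basis. \<bar>h \<bullet> b\<bar>) \<le> (\<Sum>b\<in>(Basis::'a set). r)" by (intro sum_mono) auto
  then show n: "norm (h::'a) \<le> real DIM('a) * r" using norm_le_l1[of h] by simp
  show "r > 0 \<Longrightarrow> (norm h)\<^sup>2 \<le> (real DIM('a) * r)\<^sup>2" using n by (intro power_mono) auto
qed

lemma enn_rearr:
  fixes a b c :: real
  assumes "0\<le>a" "0\<le>b" "0\<le>c"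
  shows "ennreal a * ((9 * ennreal b * X) * ennreal c) = ennreal (a * 9 * b * c) * X"
  using assms by (simp add: ennreal_mult mult_ac)

lemma proj_est:
  fixes u :: "'a::euclidean_space \<Rightarrow> real" and r :: real
  assumes "r > 0" "H10_grad \<Omega> u g" "qkey r ` \<Omega> \<subseteq> Ks" "open \<Omega>"
  shows "NL (\<lambda>x. u x - Pr r Ks u x) \<le> ennreal (2 ^ DIM('a) * 9 * (real DIM('a))\<^sup>2 * r\<^sup>2) * NL g"
proof -
  define n where "n = DIM('a)"
  have um: "u \<in> borel_measurable borel" using H10_grad_meas[OF assms(2)] .
  have Lu: "L2 u" using L2_of_H10_grad[OF assms(2)] by blast
  have "AE x in lborel. indicator (- \<Omega>) x * ennreal ((u x)\<^sup>2) = 0"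
    using H10_grad_outside[OF assms(2)] um assms(4)
    by (subst nn_integral_0_iff_AE[symmetric]) (auto simp: borel_open)
  then have out: "AE x in lborel. x \<notin> \<Omega> \<longrightarrow> u x = 0" by eventually_elim (auto simp: indicator_def)
  define F where "F x h = indicator (rbox r) h * ennreal ((u (x + h) - u x)\<^sup>2)" for x h :: 'a
  have Fm: "case_prod F \<in> borel_measurable (lborel \<Otimes>\<^sub>M lborel)"
    unfolding F_def rbox_def using um by measurable
  have pw: "AE x in lborel. ennreal ((u x - Pr r Ks u x)\<^sup>2) \<le> ennreal (1 / r ^ n) * (\<integral>\<^sup>+ h. F x h \<partial>lborel)"
    using out
  proof eventually_elim
    case (elim x)
    show ?case
    proof (cases "qkey r x \<in> Ks")
      case True
      have "ennreal ((u x - Pr r Ks u x)\<^sup>2) = ennreal ((cavg r u (qkey r x) - u x)\<^sup>2)"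
        using True by (simp add: Pr_def power2_commute)
      also have "\<dots> \<le> ennreal (1 / r ^ n) * (\<integral>\<^sup>+ y. indicator (cell r (qkey r x)) y * ennreal ((u y - u x)\<^sup>2) \<partial>lborel)"
        unfolding n_def by (rule jensen_cell) (use assms(1) Lu in auto)
      also have "\<dots> \<le> ennreal (1 / r ^ n) * (\<integral>\<^sup>+ h. F x h \<partial>lborel)"
        unfolding F_def by (intro mult_left_mono cell_to_box[OF assms(1) um]) auto
      finally show ?thesis .
    next
      case False
      then have "x \<notin> \<Omega>" using assms(3) by blast
      then show ?thesis using elim False by (simp add: Pr_def)
    qed
  qed
  have "NL (\<lambda>x. u x - Pr r Ks u x) \<le> (\<integral>\<^sup>+ x. ennreal (1 / r ^ n) * (\<integral>\<^sup>+ h. F x h \<partial>lborel) \<partial>lborel)"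
    unfolding NL_real by (rule nn_integral_mono_AE[OF pw])
  also have "\<dots> = ennreal (1 / r ^ n) * (\<integral>\<^sup>+ x. (\<integral>\<^sup>+ h. F x h \<partial>lborel) \<partial>lborel)"
    by (rule nn_integral_cmult) (use lborel.borel_measurable_nn_integral[OF Fm] in simp)
  also have "(\<integral>\<^sup>+ x. (\<integral>\<^sup>+ h. F x h \<partial>lborel) \<partial>lborel) = (\<integral>\<^sup>+ h. (\<integral>\<^sup>+ x. F x h \<partial>lborel) \<partial>lborel)"
    by (rule lborel_pair.Fubini'[symmetric, OF Fm])
  also have "\<dots> = (\<integral>\<^sup>+ h. indicator (rbox r) h * NL (\<lambda>x. u (x + h) - u x) \<partial>lborel)"
    unfolding F_def NL_real using um by (intro nn_integral_cong) (subst nn_integral_cmult, auto)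
  also have "\<dots> \<le> (\<integral>\<^sup>+ h. (9 * ennreal ((real n * r)\<^sup>2) * NL g) * indicator (rbox r :: 'a set) h \<partial>lborel)"
  proof (intro nn_integral_mono)
    fix h :: 'a
    show "indicator (rbox r) h * NL (\<lambda>x. u (x + h) - u x) \<le> (9 * ennreal ((real n * r)\<^sup>2) * NL g) * indicator (rbox r) h"
    proof (cases "h \<in> rbox r")
      case True
      have "NL (\<lambda>x. u (x + h) - u x) \<le> 9 * ennreal ((norm h)\<^sup>2) * NL g" by (rule H10_transl[OF assms(2)])
      also have "\<dots> \<le> 9 * ennreal ((real n * r)\<^sup>2) * NL g"
        using rbox_norm(2)[OF True assms(1)] unfolding n_def by (intro mult_right_mono mult_left_mono ennreal_leI) auto
      finally show ?thesis using True by simp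
    qed simp
  qed
  also have "\<dots> = (9 * ennreal ((real n * r)\<^sup>2) * NL g) * ennreal ((2*r) ^ n)"
    using rbox_measure[OF assms(1), where 'a='a] unfolding n_def by (subst nn_integral_cmult_indicator) (auto simp: rbox_def)
  finally have "NL (\<lambda>x. u x - Pr r Ks u x) \<le> ennreal (1 / r ^ n) * ((9 * ennreal ((real n * r)\<^sup>2) * NL g) * ennreal ((2*r) ^ n))"
    by (simp add: mult_left_mono)
  also have "\<dots> = ennreal (1 / r ^ n * 9 * (real n * r)\<^sup>2 * (2*r) ^ n) * NL g"
    by (rule enn_rearr) (use assms(1) in auto)
  also have "1 / r ^ n * 9 * (real n * r)\<^sup>2 * (2*r) ^ n = 2 ^ n * 9 * (real n)\<^sup>2 * r\<^sup>2"
    using assms(1) by (simp add: power_mult_distrib field_simps)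
  finally show ?thesis unfolding n_def .
qed

lemma Pr_sum:
  assumes "finite Ks"
  shows "Pr r Ks u x = (\<Sum>k\<in>Ks. cavg r u k * indicator (cell r k) x)"
proof -
  have "(\<Sum>k\<in>Ks. cavg r u k * indicator (cell r k) x) = (\<Sum>k\<in>Ks. if qkey r x = k then cavg r u k else 0)"
    by (intro sum.cong) (auto simp: cell_def indicator_def)
  also have "\<dots> = (if qkey r x \<in> Ks then cavg r u (qkey r x) else 0)"
    using assms by (simp add: sum.delta)
  finally show ?thesis unfolding Pr_def by simp
qed

lemma Pr_meas:
  assumes "finite Ks"
  shows "Pr r Ks u \<in> borel_measurable borel"
proof -
  have "Pr r Ks u = (\<lambda>x. \<Sum>k\<in>Ks. cavg r u k * indicator (cell r k) x)" using Pr_sum[OF assms] by auto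
  moreover have "(\<lambda>x. \<Sum>k\<in>Ks. cavg r u k * indicator (cell r k) x) \<in> borel_measurable borel"
    using cell_sets by (intro borel_measurable_sum borel_measurable_times borel_measurable_const borel_measurable_indicator) auto
  ultimately show ?thesis by simp
qed

lemma cavg_bound:
  fixes u :: "'a::euclidean_space \<Rightarrow> real"
  assumes "r > 0" "L2 u" "NL u \<le> 1" "k \<in> extensional Basis"
  shows "\<bar>cavg r u k\<bar> \<le> sqrt (r ^ DIM('a)) / r ^ DIM('a)"
proof -
  define I where "I = (indicator (cell r k) :: 'a \<Rightarrow> real)"
  have cs: "cell r k \<in> sets lborel" by (rule cell_sets)
  have NLI: "NL I = ennreal (r ^ DIM('a))" unfolding I_def by (simp add: NL_indicator[OF cs] cell_measure[OF assms(1,4)])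
  have LI: "L2 I" unfolding L2_def I_def using cs NLI by (simp add: I_def)
  have "ennreal ((\<bar>\<integral>y. I y * u y \<partial>lborel\<bar>)\<^sup>2) \<le> NL I * NL u"
    using CS_L2[OF LI assms(2)] by (simp add: ennreal_power)
  also have "\<dots> \<le> ennreal (r ^ DIM('a)) * 1" unfolding NLI by (intro mult_left_mono assms(3)) auto
  finally have "(\<bar>\<integral>y. I y * u y \<partial>lborel\<bar>)\<^sup>2 \<le> r ^ DIM('a)" using assms(1) by (simp add: ennreal_le_iff)
  then have "\<bar>\<integral>y. I y * u y \<partial>lborel\<bar> \<le> sqrt (r ^ DIM('a))" by (simp add: real_le_rsqrt)
  then show ?thesis unfolding cavg_def I_def using assms(1) by (simp add: abs_div divide_right_mono)
qed

lemma enn3: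
  fixes a b c :: real
  assumes "0\<le>a" "0\<le>b" "0\<le>c"
  shows "3*ennreal a + 3*ennreal b + 3*ennreal c = ennreal (3*a+3*b+3*c)"
  using assms by (simp add: ennreal_mult)

lemma factB:
  fixes \<Omega> :: "'a::euclidean_space set" and S :: "('a \<Rightarrow> real) set"
  assumes "bounded \<Omega>" "open \<Omega>" "\<Lambda> \<ge> 0" "\<eta> > 0"
    "\<And>u. u \<in> S \<Longrightarrow> \<exists>g. H10_grad \<Omega> u g \<and> NL g \<le> ennreal \<Lambda>"
    "\<And>u. u \<in> S \<Longrightarrow> NL u \<le> 1"
  shows "\<exists>F. finite F \<and> F \<subseteq> S \<and> (\<forall>u\<in>S. \<exists>v\<in>F. NL (\<lambda>x. u x - v x) \<le> ennreal \<eta>)"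
proof -
  define n where "n = DIM('a)"
  define C where "C = 2 ^ n * 9 * (real n)\<^sup>2"
  have C: "C > 0" unfolding C_def n_def by simp
  define r where "r = min 1 (sqrt (\<eta> / (12 * C * (\<Lambda> + 1))))"
  have r: "r > 0" unfolding r_def using C assms(3,4) by simp
  have r2: "r\<^sup>2 \<le> \<eta> / (12 * C * (\<Lambda> + 1))"
  proof -
    have "r \<le> sqrt (\<eta> / (12 * C * (\<Lambda> + 1)))" unfolding r_def by simp
    then have "r\<^sup>2 \<le> (sqrt (\<eta> / (12 * C * (\<Lambda> + 1))))\<^sup>2" using r by (intro power_mono) auto
    also have "\<dots> = \<eta> / (12 * C * (\<Lambda> + 1))" using C assms(3,4) by simp
    finally show ?thesis .
  qed
  have Crl: "C * r\<^sup>2 * \<Lambda> \<le> \<eta> / 12"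
  proof -
    define D where "D = 12 * C * (\<Lambda> + 1)"
    have D: "D > 0" unfolding D_def using C assms(3) by auto
    have "C * r\<^sup>2 * \<Lambda> \<le> C * (\<eta> / D) * \<Lambda>"
      using r2 C assms(3) unfolding D_def by (intro mult_right_mono mult_left_mono) auto
    also have "\<dots> = (C * \<eta> * \<Lambda>) / D" by simp
    also have "\<dots> \<le> \<eta> / 12"
    proof -
      have e: "\<eta> / 12 * D = C*\<eta>*\<Lambda> + C*\<eta>" unfolding D_def by (simp add: algebra_simps)
      have "C*\<eta> \<ge> 0" using C assms(4) by simp
      then have "C*\<eta>*\<Lambda> \<le> \<eta> / 12 * D" using e by linarith
      then show ?thesis by (simp add: pos_divide_le_eq[OF D])
    qed
    finally show ?thesis .
  qed
  obtain R where R: "\<And>x. x \<in> \<Omega> \<Longrightarrow> norm x \<le> R" using assms(1) bounded_iff by metis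
  define N :: int where "N = \<lceil>\<bar>R\<bar> / r\<rceil> + 1"
  define Ks where "Ks = (\<Pi>\<^sub>E b\<in>(Basis::'a set). {-N..N})"
  have Ksf: "finite Ks" unfolding Ks_def by (intro finite_PiE) auto
  have Ksext: "Ks \<subseteq> extensional Basis" unfolding Ks_def by (auto simp: PiE_iff)
  have qK: "qkey r ` \<Omega> \<subseteq> Ks"
  proof
    fix k assume "k \<in> qkey r ` \<Omega>"
    then obtain x where x: "x \<in> \<Omega>" "k = qkey r x" by blast
    have "\<lfloor>(x \<bullet> b) / r\<rfloor> \<in> {-N..N}" if b: "b \<in> Basis" for b
    proof -
      have xb: "\<bar>x \<bullet> b\<bar> \<le> \<bar>R\<bar>" using Basis_le_norm[OF b, of x] R[OF x(1)] by linarith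
      have t: "(x \<bullet> b) / r \<le> \<bar>R\<bar> / r" "- (\<bar>R\<bar> / r) \<le> (x \<bullet> b) / r"
        using xb r by (auto simp: divide_right_mono abs_le_iff divide_le_eq le_divide_eq)
      have c: "\<bar>R\<bar> / r \<le> of_int \<lceil>\<bar>R\<bar> / r\<rceil>" by (rule le_of_int_ceiling)
      have "\<lfloor>(x \<bullet> b) / r\<rfloor> \<le> N" unfolding floor_le_iff N_def using t c by (simp; linarith)
      moreover have "-N \<le> \<lfloor>(x \<bullet> b) / r\<rfloor>" unfolding le_floor_iff N_def using t c by (simp; linarith)
      ultimately show ?thesis by auto
    qed
    then show "k \<in> Ks" unfolding x(2) Ks_def qkey_def by (simp add: restrict_PiE_iff)
  qed
  define M1 where "M1 = (real_of_int N + 1) * r"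
  define D :: "'a set" where "D = cbox (- (\<Sum>b\<in>Basis. M1 *\<^sub>R b)) (\<Sum>b\<in>Basis. M1 *\<^sub>R b)"
  have Dc: "compact D" unfolding D_def by simp
  have inD: "x \<in> D" if "qkey r x \<in> Ks" for x
  proof -
    have hb: "\<bar>x \<bullet> b\<bar> \<le> M1" if b: "b \<in> Basis" for b
    proof -
      have "\<lfloor>(x \<bullet> b) / r\<rfloor> \<in> {-N..N}" using \<open>qkey r x \<in> Ks\<close> b unfolding Ks_def qkey_def by (auto simp: PiE_iff)
      then have "-N \<le> \<lfloor>(x \<bullet> b) / r\<rfloor>" "\<lfloor>(x \<bullet> b) / r\<rfloor> \<le> N" by auto
      then have "of_int (-N) \<le> (x \<bullet> b) / r" "(x \<bullet> b) / r < of_int N + 1" unfolding le_floor_iff floor_le_iff .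
      then have "- (real_of_int N + 1) * r \<le> x \<bullet> b" "x \<bullet> b \<le> (real_of_int N + 1) * r"
        using r by (auto simp: field_simps)
      then show ?thesis unfolding M1_def abs_le_iff by (simp add: algebra_simps; linarith)
    qed
    have h: "- M1 \<le> x \<bullet> b \<and> x \<bullet> b \<le> M1" if "b \<in> Basis" for b
      using hb[OF that] unfolding abs_le_iff by linarith
    have s: "(\<Sum>b\<in>Basis. M1 *\<^sub>R b) \<bullet> i = M1" if "i \<in> Basis" for i
      using basis_sum_inner[OF that, of "\<lambda>_. M1"] by simp
    show ?thesis unfolding D_def mem_box using h s by (simp add: inner_minus_left)
  qed
  define mD where "mD = enn2real (emeasure lborel D)"
  have mD: "emeasure lborel D = ennreal mD" "mD \<ge> 0"
    using compact_fin[OF Dc] unfolding mD_def by (auto simp: less_top ennreal_enn2real_if)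
  define \<eta>' where "\<eta>' = sqrt (\<eta> / (6 * (mD + 1)))"
  have \<eta>': "\<eta>' > 0" unfolding \<eta>'_def using assms(4) mD(2) by simp
  have \<eta>'2: "\<eta>'\<^sup>2 * mD \<le> \<eta> / 6"
  proof -
    have "\<eta>'\<^sup>2 = \<eta> / (6 * (mD + 1))" unfolding \<eta>'_def using assms(4) mD(2) by simp
    then have e: "\<eta>'\<^sup>2 * (mD + 1) = \<eta> / 6" using mD(2) by (simp add: field_simps)
    have "\<eta>'\<^sup>2 * mD \<le> \<eta>'\<^sup>2 * (mD + 1)" by (intro mult_left_mono) auto
    then show ?thesis using e by simp
  qed
  define B where "B = sqrt (r ^ DIM('a)) / r ^ DIM('a)"
  define L :: int where "L = \<lceil>B / \<eta>'\<rceil> + 1"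
  define \<kappa> where "\<kappa> u = restrict (\<lambda>k. \<lfloor>cavg r u k / \<eta>'\<rfloor>) Ks" for u
  have Lu: "L2 u" if "u \<in> S" for u using assms(5)[OF that] L2_of_H10_grad by blast
  have \<kappa>in: "\<kappa> u \<in> (\<Pi>\<^sub>E k\<in>Ks. {-L..L})" if u: "u \<in> S" for u
  proof -
    have "\<lfloor>cavg r u k / \<eta>'\<rfloor> \<in> {-L..L}" if k: "k \<in> Ks" for k
    proof -
      have "\<bar>cavg r u k\<bar> \<le> B" unfolding B_def
        by (rule cavg_bound[OF r Lu[OF u] assms(6)[OF u]]) (use k Ksext in blast)
      then have t: "\<bar>cavg r u k / \<eta>'\<bar> \<le> B / \<eta>'" using \<eta>' by (simp add: abs_div divide_right_mono)
      have c: "B / \<eta>' \<le> of_int \<lceil>B / \<eta>'\<rceil>" by (rule le_of_int_ceiling)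
      have "\<lfloor>cavg r u k / \<eta>'\<rfloor> \<le> L" unfolding floor_le_iff L_def using t c by (simp add: abs_le_iff; linarith)
      moreover have "-L \<le> \<lfloor>cavg r u k / \<eta>'\<rfloor>" unfolding le_floor_iff L_def using t c by (simp add: abs_le_iff; linarith)
      ultimately show ?thesis by auto
    qed
    then show ?thesis unfolding \<kappa>_def by (simp add: restrict_PiE_iff)
  qed
  have fin\<kappa>: "finite (\<kappa> ` S)"
    by (rule finite_subset[OF _ finite_PiE[OF Ksf, of "\<lambda>_. {-L..L}"]]) (use \<kappa>in in auto)
  define F where "F = (\<lambda>c. SOME v. v \<in> S \<and> \<kappa> v = c) ` (\<kappa> ` S)"
  have pick: "(SOME v. v \<in> S \<and> \<kappa> v = \<kappa> u) \<in> S \<and> \<kappa> (SOME v. v \<in> S \<and> \<kappa> v = \<kappa> u) = \<kappa> u" if "u \<in> S" for u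
    using someI[of "\<lambda>v. v \<in> S \<and> \<kappa> v = \<kappa> u" u] that by blast
  have "finite F" unfolding F_def using fin\<kappa> by simp
  moreover have "F \<subseteq> S" unfolding F_def using pick by auto
  moreover have "\<forall>u\<in>S. \<exists>v\<in>F. NL (\<lambda>x. u x - v x) \<le> ennreal \<eta>"
  proof
    fix u assume u: "u \<in> S"
    define v where "v = (SOME v. v \<in> S \<and> \<kappa> v = \<kappa> u)"
    have v: "v \<in> S" "\<kappa> v = \<kappa> u" using pick[OF u] unfolding v_def by auto
    have vF: "v \<in> F" unfolding F_def v_def using u by blast
    obtain gu where gu: "H10_grad \<Omega> u gu" "NL gu \<le> ennreal \<Lambda>" using assms(5)[OF u] by blast
    obtain gv where gv: "H10_grad \<Omega> v gv" "NL gv \<le> ennreal \<Lambda>" using assms(5)[OF v(1)] by blast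
    have est: "NL (\<lambda>x. w x - Pr r Ks w x) \<le> ennreal (C * r\<^sup>2 * \<Lambda>)" if "H10_grad \<Omega> w gw" "NL gw \<le> ennreal \<Lambda>" for w gw
    proof -
      have "NL (\<lambda>x. w x - Pr r Ks w x) \<le> ennreal (C * r\<^sup>2) * NL gw"
        using proj_est[OF r that(1) qK assms(2)] unfolding C_def n_def by (simp add: mult.assoc)
      also have "\<dots> \<le> ennreal (C * r\<^sup>2) * ennreal \<Lambda>" by (intro mult_left_mono that(2)) auto
      finally show ?thesis using C assms(3) by (simp add: ennreal_mult)
    qed
    have close: "\<bar>Pr r Ks u x - Pr r Ks v x\<bar> \<le> \<eta>' * indicator D x" for x
    proof (cases "qkey r x \<in> Ks")
      case True
      define k where "k = qkey r x"
      have "\<kappa> u k = \<kappa> v k" using v(2) by simp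
      then have "\<lfloor>cavg r u k / \<eta>'\<rfloor> = \<lfloor>cavg r v k / \<eta>'\<rfloor>" using True unfolding \<kappa>_def k_def by simp
      then have "\<bar>cavg r u k / \<eta>' - cavg r v k / \<eta>'\<bar> < 1" by (rule floor_eq_close)
      then have "\<bar>cavg r u k - cavg r v k\<bar> < \<eta>'" using \<eta>' by (simp add: diff_divide_distrib[symmetric] abs_div divide_less_eq)
      then show ?thesis using True inD[OF True] unfolding Pr_def k_def by simp
    qed (use \<eta>' in \<open>simp add: Pr_def\<close>)
    have mPu: "Pr r Ks u \<in> borel_measurable borel" "Pr r Ks v \<in> borel_measurable borel" by (rule Pr_meas[OF Ksf])+
    have mu: "u \<in> borel_measurable borel" "v \<in> borel_measurable borel" using H10_grad_meas gu gv by blast+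
    have "NL (\<lambda>x. u x - v x) \<le> 3 * NL (\<lambda>x. u x - Pr r Ks u x) + 3 * NL (\<lambda>x. Pr r Ks u x - Pr r Ks v x) + 3 * NL (\<lambda>x. v x - Pr r Ks v x)"
    proof (rule NL_add3)
      fix x show "norm (u x - v x) \<le> norm (u x - Pr r Ks u x) + norm (Pr r Ks u x - Pr r Ks v x) + norm (v x - Pr r Ks v x)"
        by simp
    qed (use mPu mu in auto)
    also have "\<dots> \<le> 3 * ennreal (C * r\<^sup>2 * \<Lambda>) + 3 * ennreal (\<eta>'\<^sup>2 * mD) + 3 * ennreal (C * r\<^sup>2 * \<Lambda>)"
    proof (intro add_mono mult_left_mono est[OF gu] est[OF gv] order_refl)
      have "NL (\<lambda>x. Pr r Ks u x - Pr r Ks v x) \<le> ennreal (\<eta>'\<^sup>2) * emeasure lborel D"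
        by (rule NL_small[OF Dc]) (use close in simp)
      then show "NL (\<lambda>x. Pr r Ks u x - Pr r Ks v x) \<le> ennreal (\<eta>'\<^sup>2 * mD)" using mD by (simp add: ennreal_mult)
    qed auto
    also have "\<dots> = ennreal (3 * (C * r\<^sup>2 * \<Lambda>) + 3 * (\<eta>'\<^sup>2 * mD) + 3 * (C * r\<^sup>2 * \<Lambda>))"
      by (rule enn3) (use C assms(3) mD(2) in auto)
    also have "\<dots> \<le> ennreal \<eta>" using Crl \<eta>'2 by (intro ennreal_leI) linarith
    finally show "\<exists>v\<in>F. NL (\<lambda>x. u x - v x) \<le> ennreal \<eta>" using vF by blast
  qed
  ultimately show ?thesis by blast
qed

lemma L2_integrable_inner:
  fixes a b :: "'a::euclidean_space \<Rightarrow> 'b::euclidean_space"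
  assumes "L2 a" "L2 b" shows "integrable lborel (\<lambda>x. a x \<bullet> b x)"
proof -
  have m: "a \<in> borel_measurable borel" "b \<in> borel_measurable borel" using assms unfolding L2_def by auto
  have "(\<integral>\<^sup>+x. ennreal (norm (a x \<bullet> b x)) \<partial>lborel) \<le> (\<integral>\<^sup>+x. ennreal ((norm (a x))\<^sup>2) + ennreal ((norm (b x))\<^sup>2) \<partial>lborel)"
  proof (intro nn_integral_mono)
    fix x
    have h1: "2 * (norm (a x) * norm (b x)) \<le> (norm (a x))\<^sup>2 + (norm (b x))\<^sup>2"
      using sum_squares_bound[of "norm (a x)" "norm (b x)"] by simp
    have h2: "0 \<le> norm (a x) * norm (b x)" by simp
    have "norm (a x \<bullet> b x) \<le> norm (a x) * norm (b x)" using Cauchy_Schwarz_ineq2 by simp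
    then have "norm (a x \<bullet> b x) \<le> (norm (a x))\<^sup>2 + (norm (b x))\<^sup>2" using h1 h2 by linarith
    then show "ennreal (norm (a x \<bullet> b x)) \<le> ennreal ((norm (a x))\<^sup>2) + ennreal ((norm (b x))\<^sup>2)"
      by (simp add: ennreal_plus[symmetric] del: ennreal_plus)
  qed
  also have "\<dots> = NL a + NL b" using m by (simp add: nn_integral_add NL_def)
  also have "\<dots> < \<infinity>" using assms unfolding L2_def by simp
  finally show ?thesis using m unfolding integrable_iff_bounded by auto
qed

lemma NL_int:
  fixes w :: "'a::euclidean_space \<Rightarrow> 'b::euclidean_space"
  assumes "L2 w" shows "NL w = ennreal (\<integral>x. w x \<bullet> w x \<partial>lborel)"
proof -
  have i: "integrable lborel (\<lambda>x. w x \<bullet> w x)" by (rule L2_integrable_inner[OF assms assms])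
  have "NL w = (\<integral>\<^sup>+ x. ennreal (w x \<bullet> w x) \<partial>lborel)" unfolding NL_def by (simp add: power2_norm_eq_inner)
  also have "\<dots> = ennreal (\<integral>x. w x \<bullet> w x \<partial>lborel)" by (rule nn_integral_eq_integral[OF i]) simp
  finally show ?thesis .
qed

definition eig_wit :: "'a::euclidean_space set \<Rightarrow> real \<Rightarrow> ('a \<Rightarrow> real) \<Rightarrow> ('a \<Rightarrow> 'a) \<Rightarrow> bool" where
  "eig_wit \<Omega> lam u g \<longleftrightarrow> H10_grad \<Omega> u g \<and>
      (\<forall>v h. H10_grad \<Omega> v h \<longrightarrow> (\<integral>x. g x \<bullet> h x \<partial>lborel) = lam * (\<integral>x. u x * v x \<partial>lborel))"

lemma eig_wit_ex: "u \<in> dirichlet_eigenspace \<Omega> lam \<Longrightarrow> \<exists>g. eig_wit \<Omega> lam u g"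
  unfolding dirichlet_eigenspace_def eig_wit_def by blast

lemma eig_norm:
  assumes "eig_wit \<Omega> lam u g" "NL u = 1"
  shows "NL g = ennreal lam" "lam \<ge> 0"
proof -
  have hg: "H10_grad \<Omega> u g" using assms(1) unfolding eig_wit_def by blast
  have Lu: "L2 u" and Lg: "L2 g" using L2_of_H10_grad[OF hg] by auto
  have rel: "(\<integral>x. g x \<bullet> g x \<partial>lborel) = lam * (\<integral>x. u x * u x \<partial>lborel)"
    using assms(1) hg unfolding eig_wit_def by blast
  have "ennreal (\<integral>x. u x * u x \<partial>lborel) = 1" using NL_int[OF Lu] assms(2) by simp
  then have uu: "(\<integral>x. u x * u x \<partial>lborel) = 1"
    by (metis ennreal_1 ennreal_eq_1 ennreal_inj integral_nonneg_AE AE_I2 zero_le_mult_iff le_less linorder_linear)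
  have nn: "(\<integral>x. g x \<bullet> g x \<partial>lborel) \<ge> 0" by (intro integral_nonneg_AE) auto
  show "NL g = ennreal lam" using NL_int[OF Lg] rel uu by simp
  show "lam \<ge> 0" using nn rel uu by simp
qed

lemma eig_diff:
  assumes "eig_wit \<Omega> lam u gu" "eig_wit \<Omega> lam v gv" "lam \<ge> 0"
  shows "NL (\<lambda>x. gu x - gv x) = ennreal lam * NL (\<lambda>x. u x - v x)"
proof -
  have hu: "H10_grad \<Omega> u gu" and hv: "H10_grad \<Omega> v gv" using assms unfolding eig_wit_def by blast+
  have hd: "H10_grad \<Omega> (\<lambda>x. u x - v x) (\<lambda>x. gu x - gv x)" by (rule H10_grad_diff[OF hu hv])
  have Ld: "L2 (\<lambda>x. u x - v x)" "L2 (\<lambda>x. gu x - gv x)" using L2_of_H10_grad[OF hd] by auto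
  have Lu: "L2 u" "L2 gu" using L2_of_H10_grad[OF hu] by auto
  have Lv: "L2 v" "L2 gv" using L2_of_H10_grad[OF hv] by auto
  have r1: "(\<integral>x. gu x \<bullet> (gu x - gv x) \<partial>lborel) = lam * (\<integral>x. u x * (u x - v x) \<partial>lborel)"
    using assms(1) hd unfolding eig_wit_def by blast
  have r2: "(\<integral>x. gv x \<bullet> (gu x - gv x) \<partial>lborel) = lam * (\<integral>x. v x * (u x - v x) \<partial>lborel)"
    using assms(2) hd unfolding eig_wit_def by blast
  have "(\<integral>x. (gu x - gv x) \<bullet> (gu x - gv x) \<partial>lborel) = (\<integral>x. gu x \<bullet> (gu x - gv x) - gv x \<bullet> (gu x - gv x) \<partial>lborel)"
    by (simp add: inner_diff_left)
  also have "\<dots> = (\<integral>x. gu x \<bullet> (gu x - gv x) \<partial>lborel) - (\<integral>x. gv x \<bullet> (gu x - gv x) \<partial>lborel)"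
    by (rule Bochner_Integration.integral_diff) (intro L2_integrable_inner Lu Lv Ld)+
  also have "\<dots> = lam * ((\<integral>x. u x * (u x - v x) \<partial>lborel) - (\<integral>x. v x * (u x - v x) \<partial>lborel))"
    unfolding r1 r2 by (simp add: right_diff_distrib)
  also have "(\<integral>x. u x * (u x - v x) \<partial>lborel) - (\<integral>x. v x * (u x - v x) \<partial>lborel) = (\<integral>x. u x * (u x - v x) - v x * (u x - v x) \<partial>lborel)"
    by (rule Bochner_Integration.integral_diff[symmetric]) (intro L2_integrable_mult Lu Lv Ld)+
  also have "\<dots> = (\<integral>x. (u x - v x) \<bullet> (u x - v x) \<partial>lborel)" by (simp add: left_diff_distrib)
  finally have e: "(\<integral>x. (gu x - gv x) \<bullet> (gu x - gv x) \<partial>lborel) = lam * (\<integral>x. (u x - v x) \<bullet> (u x - v x) \<partial>lborel)" .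
  have nn: "(\<integral>x. (u x - v x) \<bullet> (u x - v x) \<partial>lborel) \<ge> 0" by (intro integral_nonneg_AE) auto
  show ?thesis unfolding NL_int[OF Ld(2)] NL_int[OF Ld(1)] e using assms(3) nn by (simp add: ennreal_mult)
qed

lemma main_bound:
  fixes \<Omega> K :: "'a::euclidean_space set" and Ks :: "real \<Rightarrow> 'a set" and lam :: real
  assumes "bounded \<Omega>" "open \<Omega>" "K \<subseteq> \<Omega>" "cap \<Omega> K = 0"
    and "concentrates_to Ks K \<Omega>" and "\<delta> > 0"
  shows "eventually (\<lambda>\<epsilon>. chi_sq \<Omega> lam (Ks \<epsilon>) \<le> ennreal (6 * \<delta>)) (at_right 0)"
proof -
  define S where "S = {u. u \<in> dirichlet_eigenspace \<Omega> lam \<and> (\<integral>\<^sup>+ x. ennreal ((u x)\<^sup>2) \<partial>lborel) = 1}"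
  have chi: "chi_sq \<Omega> lam Ke = Sup {cap_u \<Omega> Ke u | u. u \<in> S}" for Ke
    unfolding chi_sq_def S_def by simp
  define \<Lambda> where "\<Lambda> = max lam 0"
  have \<Lambda>: "\<Lambda> \<ge> 0" unfolding \<Lambda>_def by simp
  define gw where "gw u = (SOME g. eig_wit \<Omega> lam u g)" for u
  have gwS: "eig_wit \<Omega> lam u (gw u)" "NL u = 1" if "u \<in> S" for u
  proof -
    from that have "\<exists>g. eig_wit \<Omega> lam u g" unfolding S_def using eig_wit_ex by blast
    then show "eig_wit \<Omega> lam u (gw u)" unfolding gw_def by (rule someI_ex)
    show "NL u = 1" using that unfolding S_def NL_real by simp
  qed
  have hS: "H10_grad \<Omega> u (gw u)" if "u \<in> S" for u using gwS[OF that] unfolding eig_wit_def by blast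
  have lamS: "lam \<ge> 0" "NL (gw u) = ennreal lam" if "u \<in> S" for u using eig_norm[OF gwS[OF that]] by auto
  define \<eta> where "\<eta> = \<delta> / (\<Lambda> + 1)"
  have \<eta>: "\<eta> > 0" unfolding \<eta>_def using \<Lambda> assms(6) by simp
  have \<Lambda>\<eta>: "\<Lambda> * \<eta> \<le> \<delta>"
  proof -
    have "\<Lambda> * \<eta> = \<delta> * (\<Lambda> / (\<Lambda> + 1))" unfolding \<eta>_def using \<Lambda> by (simp add: field_simps)
    also have "\<dots> \<le> \<delta> * 1" using \<Lambda> assms(6) by (intro mult_left_mono) auto
    finally show ?thesis by simp
  qed
  obtain F where F: "finite F" "F \<subseteq> S" "\<forall>u\<in>S. \<exists>v\<in>F. NL (\<lambda>x. u x - v x) \<le> ennreal \<eta>"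
  proof -
    have "\<exists>F. finite F \<and> F \<subseteq> S \<and> (\<forall>u\<in>S. \<exists>v\<in>F. NL (\<lambda>x. u x - v x) \<le> ennreal \<eta>)"
    proof (rule factB[OF assms(1,2) \<Lambda> \<eta>])
      fix u assume u: "u \<in> S"
      show "\<exists>g. H10_grad \<Omega> u g \<and> NL g \<le> ennreal \<Lambda>"
        using hS[OF u] lamS[OF u] unfolding \<Lambda>_def by (intro exI[of _ "gw u"]) (auto intro: ennreal_leI)
      show "NL u \<le> 1" using gwS[OF u] by simp
    qed
    then show ?thesis using that by blast
  qed
  have "\<forall>v\<in>F. \<exists>p. cc1_fun (\<Omega> - K) (fst p) (snd p) \<and> NL (\<lambda>x. gw v x - snd p x) \<le> ennreal \<delta>"
  proof
    fix v assume "v \<in> F"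
    then have "v \<in> S" using F(2) by blast
    from factA[OF assms(1,4) hS[OF this] assms(6)] show "\<exists>p. cc1_fun (\<Omega> - K) (fst p) (snd p) \<and> NL (\<lambda>x. gw v x - snd p x) \<le> ennreal \<delta>"
      by auto
  qed
  from bchoice[OF this] obtain P where P0: "\<forall>v\<in>F. cc1_fun (\<Omega> - K) (fst (P v)) (snd (P v)) \<and> NL (\<lambda>x. gw v x - snd (P v) x) \<le> ennreal \<delta>"
    by blast
  have P: "\<And>v. v \<in> F \<Longrightarrow> cc1_fun (\<Omega> - K) (fst (P v)) (snd (P v)) \<and> NL (\<lambda>x. gw v x - snd (P v) x) \<le> ennreal \<delta>"
    using P0 by blast
  have "\<forall>v\<in>F. \<exists>C. compact C \<and> C \<subseteq> \<Omega> - K \<and> (\<forall>x. x \<notin> C \<longrightarrow> fst (P v) x = 0)"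
    using P unfolding cc1_fun_def by blast
  from bchoice[OF this] obtain CW where CW0: "\<forall>v\<in>F. compact (CW v) \<and> CW v \<subseteq> \<Omega> - K \<and> (\<forall>x. x \<notin> CW v \<longrightarrow> fst (P v) x = 0)"
    by blast
  have CW: "\<And>v. v \<in> F \<Longrightarrow> compact (CW v) \<and> CW v \<subseteq> \<Omega> - K \<and> (\<forall>x. x \<notin> CW v \<longrightarrow> fst (P v) x = 0)"
    using CW0 by blast
  define U where "U = \<Omega> - (\<Union>v\<in>F. CW v)"
  have Uo: "open U" unfolding U_def
    using CW F(1) by (intro open_Diff assms(2) closed_UN) (auto intro: compact_imp_closed)
  have KU: "K \<subseteq> U" "U \<subseteq> \<Omega>" unfolding U_def using CW assms(3) by auto
  have "\<exists>eU>0. \<forall>\<epsilon>. 0 < \<epsilon> \<and> \<epsilon> < eU \<longrightarrow> Ks \<epsilon> \<subseteq> U"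
    using assms(5) Uo KU unfolding concentrates_to_def by simp
  then obtain eU where eU: "eU > 0" "\<And>\<epsilon>. 0 < \<epsilon> \<Longrightarrow> \<epsilon> < eU \<Longrightarrow> Ks \<epsilon> \<subseteq> U"
    by auto
  show ?thesis unfolding eventually_at_right_field
  proof (intro exI[of _ eU] conjI allI impI)
    show "eU > 0" by (rule eU(1))
    fix \<epsilon> :: real assume \<epsilon>: "\<epsilon> > 0" "\<epsilon> < eU"
    have sub: "Ks \<epsilon> \<subseteq> U" by (rule eU(2)[OF \<epsilon>])
    show "chi_sq \<Omega> lam (Ks \<epsilon>) \<le> ennreal (6 * \<delta>)" unfolding chi
    proof (rule Sup_least, clarify)
      fix u assume u: "u \<in> S"
      obtain v where v: "v \<in> F" "NL (\<lambda>x. u x - v x) \<le> ennreal \<eta>" using F(3) u by blast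
      have vS: "v \<in> S" using v F(2) by blast
      define w where "w = fst (P v)"
      define Gw where "Gw = snd (P v)"
      have cw: "cc1_fun (\<Omega> - K) w Gw" and nw: "NL (\<lambda>x. gw v x - Gw x) \<le> ennreal \<delta>"
        using P[OF v(1)] unfolding w_def Gw_def by auto
      have cw': "cc1_fun (\<Omega> - Ks \<epsilon>) w Gw"
      proof -
        have "compact (CW v)" "CW v \<subseteq> \<Omega> - Ks \<epsilon>" "\<forall>x. x \<notin> CW v \<longrightarrow> w x = 0"
          using CW[OF v(1)] sub v(1) unfolding U_def w_def by auto
        then show ?thesis using cw unfolding cc1_fun_def by blast
      qed
      have hw: "H10_grad \<Omega> w Gw" by (rule H10_grad_cc1[OF cc1_mono[OF cw']]) auto
      define f where "f x = u x - w x" for x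
      have hf: "H10_grad \<Omega> f (\<lambda>x. gw u x - Gw x)" unfolding f_def by (rule H10_grad_diff[OF hS[OF u] hw])
      have "H10_grad (\<Omega> - Ks \<epsilon>) (\<lambda>x. -1 * w x) (\<lambda>x. -1 *\<^sub>R Gw x)" by (rule H10_grad_scale[OF H10_grad_cc1[OF cw']])
      moreover have "(\<lambda>x. -1 * w x) = (\<lambda>x. f x - u x)" unfolding f_def by auto
      ultimately have "(\<lambda>x. f x - u x) \<in> H10 (\<Omega> - Ks \<epsilon>)" unfolding H10_def by auto
      moreover have "f \<in> H10 \<Omega>" using hf unfolding H10_def by auto
      ultimately have c0: "cap_u \<Omega> (Ks \<epsilon>) u \<le> dir_energy \<Omega> f" unfolding cap_u_def by (auto intro!: Inf_lower)
      have c1: "dir_energy \<Omega> f = NL (\<lambda>x. gw u x - Gw x)" by (rule dir_energy_eq[OF hf])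
      have c2: "NL (\<lambda>x. gw u x - Gw x) \<le> 3 * NL (\<lambda>x. gw u x - gw v x) + 3 * NL (\<lambda>x. gw v x - Gw x)"
      proof (rule NL_add2)
        show "(\<lambda>x. gw u x - gw v x) \<in> borel_measurable borel" "(\<lambda>x. gw v x - Gw x) \<in> borel_measurable borel"
          using H10_grad_meas2[OF hS[OF u]] H10_grad_meas2[OF hS[OF vS]] cc1_Gmeas[OF cw] by auto
        fix x show "norm (gw u x - Gw x) \<le> norm (gw u x - gw v x) + norm (gw v x - Gw x)"
          using norm_triangle_ineq[of "gw u x - gw v x" "gw v x - Gw x"] by simp
      qed
      have c3: "NL (\<lambda>x. gw u x - gw v x) \<le> ennreal \<delta>"
      proof -
        have l: "lam \<ge> 0" using lamS[OF u] by simp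
        have "NL (\<lambda>x. gw u x - gw v x) = ennreal lam * NL (\<lambda>x. u x - v x)"
          by (rule eig_diff[OF gwS(1)[OF u] gwS(1)[OF vS] l])
        also have "\<dots> \<le> ennreal \<Lambda> * ennreal \<eta>" using v(2) l unfolding \<Lambda>_def by (intro mult_mono ennreal_leI) auto
        also have "\<dots> = ennreal (\<Lambda> * \<eta>)" using \<Lambda> \<eta> by (simp add: ennreal_mult)
        also have "\<dots> \<le> ennreal \<delta>" using \<Lambda>\<eta> by (rule ennreal_leI)
        finally show ?thesis .
      qed
      have c4: "3 * NL (\<lambda>x. gw u x - gw v x) + 3 * NL (\<lambda>x. gw v x - Gw x) \<le> 3 * ennreal \<delta> + 3 * ennreal \<delta>"
        by (intro add_mono mult_left_mono c3 nw) auto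
      have "cap_u \<Omega> (Ks \<epsilon>) u \<le> 3 * ennreal \<delta> + 3 * ennreal \<delta>"
        using c0 c1 c2 c4 by (metis order_trans)
      also have "\<dots> = ennreal (6 * \<delta>)" using assms(6) by (simp add: ennreal_mult enn36)
      finally show "cap_u \<Omega> (Ks \<epsilon>) u \<le> ennreal (6 * \<delta>)" .
    qed
  qed
qed

theorem lemma3p3:
  fixes \<Omega> K :: "'a::euclidean_space set" and Ks :: "real \<Rightarrow> 'a set" and lam :: real
  assumes "DIM('a) \<ge> 2"
    and "bounded \<Omega>" and "open \<Omega>"
    and "compact K" and "K \<subseteq> \<Omega>" and "cap \<Omega> K = 0"
    and "\<And>\<epsilon>. \<epsilon> > 0 \<Longrightarrow> compact (Ks \<epsilon>) \<and> Ks \<epsilon> \<subseteq> \<Omega>"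
    and "concentrates_to Ks K \<Omega>"
    and "dirichlet_eigenvalue \<Omega> lam"
  shows "((\<lambda>\<epsilon>. chi_sq \<Omega> lam (Ks \<epsilon>)) \<longlongrightarrow> 0) (at_right 0)"
proof (rule order_tendstoI)
  fix a :: ennreal assume a: "a < 0"
  have "0 \<le> a" by simp
  then show "eventually (\<lambda>\<epsilon>. a < chi_sq \<Omega> lam (Ks \<epsilon>)) (at_right 0)" using a by simp
next
  fix a :: ennreal assume a: "0 < a"
  obtain \<delta> :: real where d: "\<delta> > 0" "ennreal (6 * \<delta>) < a"
  proof (cases "a = \<infinity>")
    case True then show ?thesis using that[of 1] by simp
  next
    case False
    define ar where "ar = enn2real a"
    have ar: "a = ennreal ar" "ar > 0" using False a unfolding ar_def
      by (auto simp: less_top[symmetric] ennreal_enn2real_if enn2real_positive_iff)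
    have "ennreal (6 * (ar / 12)) < ennreal ar" using ar(2) by (intro ennreal_lessI) auto
    then show ?thesis using that[of "ar / 12"] ar by simp
  qed
  have "eventually (\<lambda>\<epsilon>. chi_sq \<Omega> lam (Ks \<epsilon>) \<le> ennreal (6 * \<delta>)) (at_right 0)"
    by (rule main_bound[OF assms(2,3,5,6,8) d(1)])
  then show "eventually (\<lambda>\<epsilon>. chi_sq \<Omega> lam (Ks \<epsilon>) < a) (at_right 0)"
    by eventually_elim (use d(2) in auto)
qed

end
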